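(* Let $\mathfrak M$ be a weight matrix such that $m_k^{1/k}\to\infty$ for all $\mathbf M\in\mathfrak M$. If $F:\Omega_1\to\Omega_2$ is a real analytic mapping between open sets $\Omega_j\subseteq\mathbb{R}^{n_j}$, $j=1,2$, then $u\circ F\in\mathcal{E}^{[\mathfrak M]}(\Omega_1)$ for every $u\in\mathcal{E}^{[\mathfrak M]}(\Omega_2)$, i.e. the pullback $F^*:\mathcal{E}^{[\mathfrak M]}(\Omega_2)\to\mathcal{E}^{[\mathfrak M]}(\Omega_1)$ is well defined (both in the Roumieu case $[\mathfrak M]=\{\mathfrak M\}$ and in the Beurling case $[\mathfrak M]=(\mathfrak M)$).
   Context: A weight sequence is a sequence $\mathbf M=(M_k)_{k\in\mathbb N}$ with $M_0=1$, such that $\mu_k:=M_k/M_{k-1}$ satisfies $1\le\mu_1\le\mu_2\le\cdots$, and $M_k^{1/k}\to\infty$; write $m_k=M_k/k!$. A weight matrix is a family of weight sequences totally ordered by the pointwise order. For open $\Omega\subseteq\mathbb R^n$, $\mathcal E^{\{\mathfrak M\}}(\Omega)$ is the set of $f\in C^\infty(\Omega)$ such that for every relatively compact open $V\subseteq\Omega$ there exist $\mathbf M\in\mathfrak M$ and $\rho>0$ with $\sup_{x\in V,\alpha\in\mathbb N^n}|\partial^\alpha f(x)|/(\rho^{|\alpha|}M_{|\alpha|})<\infty$; $\mathcal E^{(\mathfrak M)}(\Omega)$ is the set of $f\in C^\infty(\Omega)$ such that this supremum is finite for every relatively compact open $V\subseteq\Omega$, every $\mathbf M\in\mathfrak M$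 and every $\rho>0$. *)

theory Defs
  imports "HOL-Analysis.Analysis"
begin

definition quot_seq :: "(nat \<Rightarrow> real) \<Rightarrow> nat \<Rightarrow> real" where
  "quot_seq M k = M k / M (k - 1)"

definition weight_sequence :: "(nat \<Rightarrow> real) \<Rightarrow> bool" where
  "weight_sequence M \<longleftrightarrow>
     M 0 = 1 \<and> 1 \<le> quot_seq M 1 \<and> (\<forall>k\<ge>1. quot_seq M k \<le> quot_seq M (Suc k)) \<and>
     filterlim (\<lambda>k. M k powr (1 / real k)) at_top sequentially"

definition weight_matrix :: "(nat \<Rightarrow> real) set \<Rightarrow> bool" where
  "weight_matrix \<MM> \<longleftrightarrow> (\<forall>M\<in>\<MM>. weight_sequence M) \<and>
     (\<forall>M\<in>\<MM>. \<forall>N\<in>\<MM>. (\<forall>k. M k \<le> N k) \<or> (\<forall>k. N k \<le> M k))"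

definition pd :: "'n::finite \<Rightarrow> (real^'n \<Rightarrow> real) \<Rightarrow> real^'n \<Rightarrow> real" where
  "pd i g x = deriv (\<lambda>t::real. g (x + t *\<^sub>R axis i 1)) 0"

primrec dlist :: "'n::finite list \<Rightarrow> (real^'n \<Rightarrow> real) \<Rightarrow> real^'n \<Rightarrow> real" where
  "dlist [] f = f"
| "dlist (i # is) f = pd i (dlist is f)"

text \<open>Partial derivative for multi-index alpha: differentiate alpha i times in direction i
 (in some fixed order; for smooth functions the order is irrelevant).\<close>
definition pmulti :: "('n::finite \<Rightarrow> nat) \<Rightarrow> (real^'n \<Rightarrow> real) \<Rightarrow> real^'n \<Rightarrow> real" where
  "pmulti \<alpha> f = dlist (SOME xs. \<forall>i. count_list xs i = \<alpha> i) f"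

definition mlen :: "('n::finite \<Rightarrow> nat) \<Rightarrow> nat" where
  "mlen \<alpha> = (\<Sum>i\<in>UNIV. \<alpha> i)"

definition smooth_on :: "(real^'n::finite) set \<Rightarrow> (real^'n \<Rightarrow> real) \<Rightarrow> bool" where
  "smooth_on \<Omega> f \<longleftrightarrow> (\<forall>ds. continuous_on \<Omega> (dlist ds f) \<and>
      (\<forall>i. \<forall>x\<in>\<Omega>. (\<lambda>t::real. dlist ds f (x + t *\<^sub>R axis i 1)) differentiable (at 0)))"

definition rel_compact_open :: "(real^'n::finite) set \<Rightarrow> (real^'n) set \<Rightarrow> bool" where
  "rel_compact_open V \<Omega> \<longleftrightarrow> open V \<and> compact (closure V) \<and> closure V \<subseteq> \<Omega>"

definition roumieu :: "(nat \<Rightarrow> real) set \<Rightarrow> (real^'n::finite) set \<Rightarrow> (real^'n \<Rightarrow> real) set" where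
  "roumieu \<MM> \<Omega> = {f. smooth_on \<Omega> f \<and>
     (\<forall>V. rel_compact_open V \<Omega> \<longrightarrow>
        (\<exists>M\<in>\<MM>. \<exists>\<rho>>0. \<exists>C. \<forall>x\<in>V. \<forall>\<alpha>.
            \<bar>pmulti \<alpha> f x\<bar> \<le> C * (\<rho> ^ mlen \<alpha> * M (mlen \<alpha>))))}"

definition beurling :: "(nat \<Rightarrow> real) set \<Rightarrow> (real^'n::finite) set \<Rightarrow> (real^'n \<Rightarrow> real) set" where
  "beurling \<MM> \<Omega> = {f. smooth_on \<Omega> f \<and>
     (\<forall>V. rel_compact_open V \<Omega> \<longrightarrow>
        (\<forall>M\<in>\<MM>. \<forall>\<rho>>0. \<exists>C. \<forall>x\<in>V. \<forall>\<alpha>.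
            \<bar>pmulti \<alpha> f x\<bar> \<le> C * (\<rho> ^ mlen \<alpha> * M (mlen \<alpha>))))}"

text \<open>g is real analytic on Omega: near every point it is the sum of an (unconditionally,
 i.e. absolutely) convergent power series.\<close>
definition real_analytic_on :: "(real^'n::finite) set \<Rightarrow> (real^'n \<Rightarrow> real) \<Rightarrow> bool" where
  "real_analytic_on \<Omega> g \<longleftrightarrow> (\<forall>x0\<in>\<Omega>. \<exists>r>0. \<exists>c :: ('n \<Rightarrow> nat) \<Rightarrow> real.
      \<forall>x\<in>ball x0 r. ((\<lambda>\<alpha>. c \<alpha> * (\<Prod>i\<in>UNIV. (x$i - x0$i) ^ \<alpha> i)) has_sum g x) UNIV)"

definition real_analytic_map :: "(real^'n::finite) set \<Rightarrow> (real^'n \<Rightarrow> real^'m::finite) \<Rightarrow> bool" where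
  "real_analytic_map \<Omega> F \<longleftrightarrow> (\<forall>j. real_analytic_on \<Omega> (\<lambda>x. F x $ j))"

end

theory Submission
  imports Defs
begin


abbreviation ax :: "'n::finite \<Rightarrow> real^'n" where "ax i \<equiv> axis i 1"

lemma pd_DERIV:
  assumes "((\<lambda>t. g (x + t *\<^sub>R ax i)) has_real_derivative D) (at 0)"
  shows "pd i g x = D"
  using assms unfolding pd_def by (rule DERIV_imp_deriv)

lemma ev_line_in_open:
  fixes x :: "real^'n::finite"
  assumes "open S" "x \<in> S"
  shows "\<forall>\<^sub>F t in nhds (0::real). x + t *\<^sub>R v \<in> S"
proof -
  have "((\<lambda>t::real. x + t *\<^sub>R v) \<longlongrightarrow> x + 0 *\<^sub>R v) (nhds 0)"
    by (intro tendsto_intros filterlim_ident)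
  then have "((\<lambda>t::real. x + t *\<^sub>R v) \<longlongrightarrow> x) (nhds 0)" by simp
  then show ?thesis using assms topological_tendstoD by blast
qed

lemma pd_local:
  assumes "open S" "x \<in> S" "\<And>y. y \<in> S \<Longrightarrow> g y = h y"
  shows "pd i g x = pd i h x"
proof -
  have ev: "\<forall>\<^sub>F t in nhds 0. g (x + t *\<^sub>R ax i) = h (x + t *\<^sub>R ax i)"
    using ev_line_in_open[OF assms(1,2), of "ax i"] by eventually_elim (use assms(3) in auto)
  have "\<And>D. DERIV (\<lambda>t. g (x + t *\<^sub>R ax i)) 0 :> D \<longleftrightarrow> DERIV (\<lambda>t. h (x + t *\<^sub>R ax i)) 0 :> D"
    by (rule DERIV_cong_ev[OF refl ev refl])
  then show ?thesis unfolding pd_def deriv_def by simp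
qed

lemma dlist_append: "dlist ds (dlist es f) = dlist (ds @ es) f"
  by (induction ds) auto

lemma smooth_on_dlist: "smooth_on S f \<Longrightarrow> smooth_on S (dlist es f)"
  unfolding smooth_on_def by (simp add: dlist_append)

lemma smooth_line:
  assumes "smooth_on S f" "x \<in> S"
  shows "((\<lambda>t. dlist ds f (x + t *\<^sub>R ax i)) has_real_derivative dlist (i#ds) f x) (at 0)"
proof -
  have "(\<lambda>t::real. dlist ds f (x + t *\<^sub>R ax i)) differentiable (at 0)"
    using assms unfolding smooth_on_def by blast
  then have "((\<lambda>t. dlist ds f (x + t *\<^sub>R ax i)) has_real_derivative
      deriv (\<lambda>t. dlist ds f (x + t *\<^sub>R ax i)) 0) (at 0)"
    using DERIV_deriv_iff_real_differentiable by blast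
  then show ?thesis by (simp add: pd_def)
qed

lemma smooth_line0:
  assumes "smooth_on S f" "x \<in> S"
  shows "((\<lambda>t. f (x + t *\<^sub>R ax i)) has_real_derivative pd i f x) (at 0)"
  using smooth_line[OF assms, of "[]" i] by simp

lemma line_shift:
  fixes v :: "'a::real_vector"
  assumes "((\<lambda>t. g (x + t *\<^sub>R v)) has_real_derivative D) (at 0)" "x = z + t0 *\<^sub>R v"
  shows "((\<lambda>t. g (z + t *\<^sub>R v)) has_real_derivative D) (at t0)"
proof -
  have "((\<lambda>t. g (x + (t - t0) *\<^sub>R v)) has_real_derivative D) (at t0)"
    using DERIV_shift[of "\<lambda>t. g (x + t *\<^sub>R v)" D t0 "-t0"] assms(1)
    by simp
  moreover have "(\<lambda>t. g (x + (t - t0) *\<^sub>R v)) = (\<lambda>t. g (z + t *\<^sub>R v))"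
  proof
    fix t have "z + t0 *\<^sub>R v + (t - t0) *\<^sub>R v = z + t *\<^sub>R v"
      by (simp add: scaleR_diff_left algebra_simps)
    then show "g (x + (t - t0) *\<^sub>R v) = g (z + t *\<^sub>R v)" using assms(2) by (simp only:)
  qed
  ultimately show ?thesis by simp
qed

lemma smooth_line_at:
  assumes "smooth_on S f" "z + t0 *\<^sub>R ax i \<in> S"
  shows "((\<lambda>t. dlist ds f (z + t *\<^sub>R ax i)) has_real_derivative dlist (i#ds) f (z + t0 *\<^sub>R ax i)) (at t0)"
  by (rule line_shift[OF smooth_line[OF assms]]) simp

lemma smooth_cont:
  assumes "smooth_on S f" shows "continuous_on S (dlist ds f)"
  using assms unfolding smooth_on_def by blast



lemma norm_ax_scale[simp]: "norm (c *\<^sub>R (ax i :: real^'n::finite)) = \<bar>c\<bar>"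
  by simp

lemma near2:
  fixes y :: "real^'n::finite"
  assumes "\<bar>s\<bar> \<le> h" "\<bar>t\<bar> < h"
  shows "dist (y + s *\<^sub>R ax a + t *\<^sub>R ax b) y < 2*h"
proof -
  have "dist (y + s *\<^sub>R ax a + t *\<^sub>R ax b) y = norm (s *\<^sub>R ax a + t *\<^sub>R ax b)"
    by (simp add: dist_norm)
  also have "\<dots> \<le> norm (s *\<^sub>R ax a) + norm (t *\<^sub>R ax b)" by (rule norm_triangle_ineq)
  also have "\<dots> < 2*h" using assms by simp
  finally show ?thesis .
qed

lemma schwarz_aux:
  fixes y :: "real^'n::finite"
  assumes sm: "smooth_on S g" and sub: "ball y r \<subseteq> S" and h: "0 < h" "2*h < r"
  shows "\<exists>w. dist w y < 2*h \<and>
    g (y + h *\<^sub>R ax a + h *\<^sub>R ax b) - g (y + h *\<^sub>R ax a) - g (y + h *\<^sub>R ax b) + g y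
      = h * h * pd b (pd a g) w"
proof -
  have inS: "y + s *\<^sub>R ax a + t *\<^sub>R ax b \<in> S" if "\<bar>s\<bar> \<le> h" "\<bar>t\<bar> \<le> h" for s t a b
  proof -
    have "dist (y + s *\<^sub>R ax a + t *\<^sub>R ax b) y \<le> \<bar>s\<bar> + \<bar>t\<bar>"
    proof -
      have "dist (y + s *\<^sub>R ax a + t *\<^sub>R ax b) y = norm (s *\<^sub>R ax a + t *\<^sub>R ax b)"
        by (simp add: dist_norm)
      also have "\<dots> \<le> norm (s *\<^sub>R ax a) + norm (t *\<^sub>R ax b)" by (rule norm_triangle_ineq)
      finally show ?thesis by simp
    qed
    then have "dist y (y + s *\<^sub>R ax a + t *\<^sub>R ax b) < r" 
      using that h by (simp add: dist_commute)
    then show ?thesis using sub by auto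
  qed
  define \<psi> where "\<psi> s = g (y + h *\<^sub>R ax b + s *\<^sub>R ax a) - g (y + s *\<^sub>R ax a)" for s
  define \<psi>' where "\<psi>' s = pd a g (y + h *\<^sub>R ax b + s *\<^sub>R ax a) - pd a g (y + s *\<^sub>R ax a)" for s
  have "DERIV \<psi> s :> \<psi>' s" if "0 \<le> s" "s \<le> h" for s
  proof -
    have p1: "y + h *\<^sub>R ax b + s *\<^sub>R ax a \<in> S" using inS[of h s b a] that h by simp
    have p2: "y + s *\<^sub>R ax a \<in> S" using inS[of s 0 a a] that h by simp
    have d1: "((\<lambda>t. dlist [] g (y + h *\<^sub>R ax b + t *\<^sub>R ax a)) has_real_derivative
        dlist [a] g (y + h *\<^sub>R ax b + s *\<^sub>R ax a)) (at s)"
      by (rule smooth_line_at[OF sm p1])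
    have d2: "((\<lambda>t. dlist [] g (y + t *\<^sub>R ax a)) has_real_derivative
        dlist [a] g (y + s *\<^sub>R ax a)) (at s)"
      by (rule smooth_line_at[OF sm p2])
    show ?thesis unfolding \<psi>_def \<psi>'_def using DERIV_diff[OF d1 d2] by simp
  qed
  then obtain \<sigma> where \<sigma>: "0 < \<sigma>" "\<sigma> < h" "\<psi> h - \<psi> 0 = (h - 0) * \<psi>' \<sigma>"
    using MVT2[of 0 h \<psi> \<psi>'] h by auto
  define \<phi> where "\<phi> t = pd a g (y + \<sigma> *\<^sub>R ax a + t *\<^sub>R ax b)" for t
  have "DERIV \<phi> t :> pd b (pd a g) (y + \<sigma> *\<^sub>R ax a + t *\<^sub>R ax b)" if "0 \<le> t" "t \<le> h" for t
  proof -
    have p1: "y + \<sigma> *\<^sub>R ax a + t *\<^sub>R ax b \<in> S" using inS[of \<sigma> t a b] that \<sigma> by simp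
    show ?thesis unfolding \<phi>_def using smooth_line_at[OF sm p1, of "[a]"] by simp
  qed
  then obtain \<tau> where \<tau>: "0 < \<tau>" "\<tau> < h"
     "\<phi> h - \<phi> 0 = (h - 0) * pd b (pd a g) (y + \<sigma> *\<^sub>R ax a + \<tau> *\<^sub>R ax b)"
    using MVT2[of 0 h \<phi> "\<lambda>t. pd b (pd a g) (y + \<sigma> *\<^sub>R ax a + t *\<^sub>R ax b)"] h by auto
  have "\<psi>' \<sigma> = \<phi> h - \<phi> 0" unfolding \<psi>'_def \<phi>_def by (simp add: algebra_simps)
  moreover have "\<psi> h - \<psi> 0 = g (y + h *\<^sub>R ax a + h *\<^sub>R ax b) - g (y + h *\<^sub>R ax a) - g (y + h *\<^sub>R ax b) + g y"
    unfolding \<psi>_def by (simp add: algebra_simps)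
  moreover have "dist (y + \<sigma> *\<^sub>R ax a + \<tau> *\<^sub>R ax b) y < 2*h"
    by (rule near2) (use \<sigma> \<tau> in auto)
  ultimately show ?thesis using \<sigma>(3) \<tau>(3) by (intro exI[of _ "y + \<sigma> *\<^sub>R ax a + \<tau> *\<^sub>R ax b"]) auto
qed

lemma schwarz:
  fixes y :: "real^'n::finite"
  assumes sm: "smooth_on S g" and op: "open S" and y: "y \<in> S"
  shows "pd a (pd b g) y = pd b (pd a g) y"
proof -
  obtain r where r: "r > 0" "ball y r \<subseteq> S" using op y open_contains_ball by blast
  have c1: "continuous_on S (dlist [a,b] g)" and c2: "continuous_on S (dlist [b,a] g)"
    using smooth_cont[OF sm] by blast+
  have eps: "\<bar>pd a (pd b g) y - pd b (pd a g) y\<bar> \<le> 2 * e" if e: "e > 0" for e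
  proof -
    obtain d1 where d1: "d1 > 0" "\<And>x'. x' \<in> S \<Longrightarrow> dist x' y < d1 \<Longrightarrow> dist (pd a (pd b g) x') (pd a (pd b g) y) < e"
      using c1 y e unfolding continuous_on_iff by fastforce
    obtain d2 where d2: "d2 > 0" "\<And>x'. x' \<in> S \<Longrightarrow> dist x' y < d2 \<Longrightarrow> dist (pd b (pd a g) x') (pd b (pd a g) y) < e"
      using c2 y e unfolding continuous_on_iff by fastforce
    define h where "h = min r (min d1 d2) / 3"
    have h: "h > 0" "2*h < r" "2*h \<le> d1" "2*h \<le> d2" using r d1 d2 by (auto simp: h_def)
    obtain w where w: "dist w y < 2*h"
      "g (y + h *\<^sub>R ax a + h *\<^sub>R ax b) - g (y + h *\<^sub>R ax a) - g (y + h *\<^sub>R ax b) + g y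
      = h * h * pd b (pd a g) w"
      using schwarz_aux[OF sm r(2) h(1,2), of a b] by blast
    obtain w' where w': "dist w' y < 2*h"
      "g (y + h *\<^sub>R ax b + h *\<^sub>R ax a) - g (y + h *\<^sub>R ax b) - g (y + h *\<^sub>R ax a) + g y
      = h * h * pd a (pd b g) w'"
      using schwarz_aux[OF sm r(2) h(1,2), of b a] by blast
    have "h * h * pd b (pd a g) w = h * h * pd a (pd b g) w'"
      using w(2) w'(2) by (simp add: algebra_simps)
    then have eq: "pd b (pd a g) w = pd a (pd b g) w'" using h by simp
    have wS: "w \<in> S" "w' \<in> S" using w(1) w'(1) h r(2) by (auto simp: dist_commute)
    have "dist (pd b (pd a g) w) (pd b (pd a g) y) < e" using d2(2)[OF wS(1)] w(1) h by simp
    moreover have "dist (pd a (pd b g) w') (pd a (pd b g) y) < e" using d1(2)[OF wS(2)] w'(1) h by simp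
    ultimately show ?thesis using eq by (simp add: dist_real_def)
  qed
  have "\<bar>pd a (pd b g) y - pd b (pd a g) y\<bar> \<le> 0"
  proof (rule field_le_epsilon)
    fix e :: real assume "e > 0"
    then have "\<bar>pd a (pd b g) y - pd b (pd a g) y\<bar> \<le> 2 * (e/2)" using eps[of "e/2"] by simp
    then show "\<bar>pd a (pd b g) y - pd b (pd a g) y\<bar> \<le> 0 + e" by simp
  qed
  then show ?thesis by simp
qed



lemma dlist_move:
  assumes sm: "smooth_on S g" and op: "open S"
  shows "y \<in> S \<Longrightarrow> dlist (p @ a # q) g y = dlist (a # p @ q) g y"
proof (induction p arbitrary: y)
  case Nil then show ?case by simp
next
  case (Cons b p)
  have "dlist ((b # p) @ a # q) g y = pd b (dlist (p @ a # q) g) y" by simp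
  also have "\<dots> = pd b (dlist (a # p @ q) g) y"
    by (rule pd_local[OF op Cons.prems]) (use Cons.IH in auto)
  also have "\<dots> = pd b (pd a (dlist (p @ q) g)) y" by simp
  also have "\<dots> = pd a (pd b (dlist (p @ q) g)) y"
    by (rule schwarz[OF smooth_on_dlist[OF sm] op Cons.prems, symmetric])
  finally show ?case by simp
qed

lemma dlist_perm:
  assumes sm: "smooth_on S g" and op: "open S"
  shows "mset es = mset es' \<Longrightarrow> y \<in> S \<Longrightarrow> dlist es g y = dlist es' g y"
proof (induction es arbitrary: es' y)
  case Nil then show ?case by simp
next
  case (Cons a es)
  have "a \<in> set es'" using Cons.prems(1) by (metis list.set_intros(1) set_mset_mset)
  then obtain p q where pq: "es' = p @ a # q" by (meson split_list)
  have m: "mset es = mset (p @ q)" using Cons.prems(1) pq by simp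
  have "dlist (a # es) g y = pd a (dlist es g) y" by simp
  also have "\<dots> = pd a (dlist (p @ q) g) y"
    by (rule pd_local[OF op Cons.prems(2)]) (use Cons.IH[OF m] in auto)
  also have "\<dots> = dlist (a # p @ q) g y" by simp
  also have "\<dots> = dlist es' g y" using dlist_move[OF sm op Cons.prems(2)] pq by simp
  finally show ?case .
qed

lemma exists_count_list:
  fixes \<alpha> :: "'n::finite \<Rightarrow> nat"
  shows "\<exists>xs. \<forall>i. count_list xs i = \<alpha> i"
proof -
  define A where "A = (\<Sum>i\<in>UNIV. replicate_mset (\<alpha> i) i)"
  obtain xs where xs: "mset xs = A" using ex_mset by blast
  have "count A i = \<alpha> i" for i
    unfolding A_def by (simp add: count_sum)
  then show ?thesis using xs by (metis count_mset)
qed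

lemma size_mset_count:
  fixes xs :: "'n::finite list"
  shows "(\<Sum>i\<in>UNIV. count_list xs i) = length xs"
proof (induction xs)
  case Nil then show ?case by simp
next
  case (Cons a xs)
  have "(\<Sum>i\<in>UNIV. count_list (a # xs) i) = (\<Sum>i\<in>UNIV. (if a = i then 1 else 0) + count_list xs i)"
    by (rule sum.cong) auto
  also have "\<dots> = 1 + (\<Sum>i\<in>UNIV. count_list xs i)" by (simp add: sum.distrib)
  finally show ?case using Cons by simp
qed

lemma pmulti_eq:
  fixes \<alpha> :: "'n::finite \<Rightarrow> nat"
  obtains xs where "pmulti \<alpha> f = dlist xs f" "\<forall>i. count_list xs i = \<alpha> i" "mlen \<alpha> = length xs"
proof -
  let ?xs = "SOME xs. \<forall>i. count_list xs i = \<alpha> i"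
  have c: "\<forall>i. count_list ?xs i = \<alpha> i" using someI_ex[OF exists_count_list[of \<alpha>]] .
  moreover have "mlen \<alpha> = length ?xs"
    unfolding mlen_def using size_mset_count[of ?xs] c by simp
  ultimately show ?thesis using that pmulti_def by blast
qed

lemma pmulti_bound_dlist:
  fixes u :: "real^'n::finite \<Rightarrow> real"
  assumes sm: "smooth_on S u" and op: "open S" and y: "y \<in> S"
    and bd: "\<And>\<alpha>. \<bar>pmulti \<alpha> u y\<bar> \<le> B (mlen \<alpha>)"
  shows "\<bar>dlist es u y\<bar> \<le> B (length es)"
proof -
  obtain xs where xs: "pmulti (count_list es) u = dlist xs u" "\<forall>i. count_list xs i = count_list es i"
      "mlen (count_list es) = length xs"
    by (rule pmulti_eq)
  have "mset xs = mset es" using xs(2) by (simp add: multiset_eq_iff count_mset)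
  then have "dlist es u y = dlist xs u y" using dlist_perm[OF sm op _ y] by metis
  moreover have "length xs = length es" using \<open>mset xs = mset es\<close> by (metis size_mset)
  ultimately show ?thesis using bd[of "count_list es"] xs by simp
qed

lemma dlist_bound_pmulti:
  fixes f :: "real^'n::finite \<Rightarrow> real"
  assumes "\<And>es. \<bar>dlist es f y\<bar> \<le> B (length es)"
  shows "\<bar>pmulti \<alpha> f y\<bar> \<le> B (mlen \<alpha>)"
proof -
  obtain xs where "pmulti \<alpha> f = dlist xs f" "mlen \<alpha> = length xs" by (rule pmulti_eq)
  then show ?thesis using assms by simp
qed



definition PA :: "'m::finite set \<Rightarrow> real^'m \<Rightarrow> real^'m" where
  "PA A h = (\<chi> i. if i \<in> A then h$i else 0)"

lemma PA_linear: "linear (PA A)"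
  by (rule linearI) (auto simp: PA_def vec_eq_iff)

lemma PA_norm: "norm (PA A h) \<le> norm h"
  by (rule norm_le_componentwise_cart) (auto simp: PA_def)

lemma C1_frechet:
  fixes g :: "real^'m::finite \<Rightarrow> real"
  assumes sm: "smooth_on S g" and op: "open S" and y: "y \<in> S"
  shows "(g has_derivative (\<lambda>h. \<Sum>i\<in>UNIV. h$i * pd i g y)) (at y)"
proof -
  obtain r where r: "r > 0" "ball y r \<subseteq> S" using op y open_contains_ball by blast
  have cpd: "isCont (pd i g) y" for i
    using smooth_cont[OF sm, of "[i]"] op y by (simp add: continuous_on_eq_continuous_at)
  have main: "((\<lambda>h. g (y + PA A h)) has_derivative (\<lambda>h. \<Sum>i\<in>A. h$i * pd i g y)) (at 0)"
    for A :: "'m set"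
  proof -
    have "finite A" by simp
    then show ?thesis
    proof (induction A rule: finite_induct)
      case empty
      have z: "PA {} h = 0" for h :: "real^'m" by (simp add: PA_def vec_eq_iff)
      have "(\<lambda>h. g (y + PA {} h)) = (\<lambda>h. g y)" by (simp add: z)
      then show ?case by simp
    next
      case (insert i A)
      define X where "X = ball (0::real^'m) (r/2)"
      define Y where "Y = ball (0::real) (r/2)"
      define f where "f a b = g (y + PA A a + b *\<^sub>R ax i)" for a b
      have inS: "y + PA A a + b *\<^sub>R ax i \<in> S" if "a \<in> X" "b \<in> Y" for a b
      proof -
        have "norm (PA A a + b *\<^sub>R ax i) \<le> norm (PA A a) + norm (b *\<^sub>R ax i)" by (rule norm_triangle_ineq)
        also have "\<dots> < r" using PA_norm[of A a] that by (simp add: X_def Y_def)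
        finally have "norm (PA A a + b *\<^sub>R ax i) < r" .
        moreover have "dist y (y + (PA A a + b *\<^sub>R ax i)) = norm (PA A a + b *\<^sub>R ax i)"
          by (metis add_diff_cancel_left' dist_commute dist_norm)
        ultimately have "y + (PA A a + b *\<^sub>R ax i) \<in> ball y r" by simp
        then show ?thesis using r(2) by (auto simp: add.assoc)
      qed
      have fx: "((\<lambda>a. f a 0) has_derivative (\<lambda>h. \<Sum>j\<in>A. h$j * pd j g y)) (at 0 within X)"
        using insert.IH by (simp add: f_def has_derivative_at_withinI)
      have fy: "((\<lambda>b. f a b) has_derivative blinfun_apply (blinfun_mult_right (pd i g (y + PA A a + b *\<^sub>R ax i)))) (at b within Y)"
        if "a \<in> X" "b \<in> Y" for a b
      proof -
        have "((\<lambda>t. dlist [] g (y + PA A a + t *\<^sub>R ax i)) has_real_derivative dlist [i] g (y + PA A a + b *\<^sub>R ax i)) (at b)"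
          by (rule smooth_line_at[OF sm inS[OF that]])
        then show ?thesis
          by (auto simp: f_def has_field_derivative_def intro: has_derivative_at_withinI)
      qed
      have lin: "linear (\<lambda>p::(real^'m) \<times> real. y + PA A (fst p) + snd p *\<^sub>R ax i - y)"
        using PA_linear[of A] by (auto simp: linear_iff algebra_simps)
      have c2: "continuous (at (0,0) within X \<times> Y) (\<lambda>p::(real^'m) \<times> real. y + PA A (fst p) + snd p *\<^sub>R ax i)"
      proof -
        have "continuous (at (0,0) within X \<times> Y) (\<lambda>p::(real^'m) \<times> real. y + PA A (fst p) + snd p *\<^sub>R ax i - y)"
          using linear_continuous_within[OF lin[unfolded linear_conv_bounded_linear]] by blast
        from continuous_add[OF this continuous_const[of _ y]]
        have "continuous (at (0,0) within X \<times> Y) (\<lambda>p::(real^'m) \<times> real. (y + PA A (fst p) + snd p *\<^sub>R ax i - y) + y)" .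
        then show ?thesis by (simp add: algebra_simps)
      qed
      have p0: "y + PA A (fst (0::real^'m, 0::real)) + snd (0::real^'m, 0::real) *\<^sub>R ax i = y"
        using linear_0[OF PA_linear] by simp
      have c3: "continuous (at (0,0) within X \<times> Y) (\<lambda>p::(real^'m) \<times> real. pd i g (y + PA A (fst p) + snd p *\<^sub>R ax i))"
        by (rule continuous_within_compose3[where g="pd i g", OF _ c2]) (use cpd p0 in simp)
      have cont: "continuous (at (0,0) within X \<times> Y) (\<lambda>(a,b). blinfun_mult_right (pd i g (y + PA A a + b *\<^sub>R ax i)))"
        using bounded_linear.continuous[OF bounded_linear_blinfun_mult_right c3] by (simp add: case_prod_unfold)
      have Y0: "(0::real) \<in> Y" "convex Y" using r by (auto simp: Y_def)
      have D: "((\<lambda>(a,b). f a b) has_derivative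
          (\<lambda>(ta,tb). (\<Sum>j\<in>A. ta$j * pd j g y) + blinfun_apply (blinfun_mult_right (pd i g (y + PA A 0 + 0 *\<^sub>R ax i))) tb))
          (at (0,0) within X \<times> Y)"
        by (rule has_derivative_partialsI[OF fx fy cont Y0]) auto
      have opXY: "open (X \<times> Y)" "(0,0) \<in> X \<times> Y" using r by (auto simp: X_def Y_def open_Times)
      have D2: "((\<lambda>(a,b). f a b) has_derivative
          (\<lambda>(ta,tb). (\<Sum>j\<in>A. ta$j * pd j g y) + tb * pd i g y)) (at (0,0))"
        using D at_within_open[OF opXY(2) opXY(1)] p0 by (simp add: mult.commute)
      have L: "((\<lambda>h::real^'m. (h, h$i)) has_derivative (\<lambda>h. (h, h$i))) (at 0)"
        by (intro has_derivative_Pair has_derivative_ident bounded_linear_imp_has_derivative bounded_linear_vec_nth)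
      have C: "(((\<lambda>(a,b). f a b) \<circ> (\<lambda>h::real^'m. (h, h$i))) has_derivative
          ((\<lambda>(ta,tb). (\<Sum>j\<in>A. ta$j * pd j g y) + tb * pd i g y) \<circ> (\<lambda>h. (h, h$i)))) (at 0)"
        using diff_chain_at[OF L] D2 by simp
      have e1: "((\<lambda>(a,b). f a b) \<circ> (\<lambda>h::real^'m. (h, h$i))) = (\<lambda>h. g (y + PA (insert i A) h))"
      proof
        fix h :: "real^'m"
        have "PA A h + h$i *\<^sub>R ax i = PA (insert i A) h"
          using insert.hyps(2) by (auto simp: PA_def vec_eq_iff axis_def)
        then show "((\<lambda>(a,b). f a b) \<circ> (\<lambda>h::real^'m. (h, h$i))) h = g (y + PA (insert i A) h)"
          by (simp add: f_def add.assoc)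
      qed
      have e2: "((\<lambda>(ta,tb). (\<Sum>j\<in>A. ta$j * pd j g y) + tb * pd i g y) \<circ> (\<lambda>h::real^'m. (h, h$i)))
          = (\<lambda>h. \<Sum>j\<in>insert i A. h$j * pd j g y)"
        using insert.hyps by (auto simp: fun_eq_iff)
      show ?case using C unfolding e1 e2 .
    qed
  qed
  have "PA UNIV h = h" for h :: "real^'m" by (simp add: PA_def vec_eq_iff)
  then have m: "((\<lambda>h. g (y + h)) has_derivative (\<lambda>h. \<Sum>i\<in>UNIV. h$i * pd i g y)) (at 0)"
    using main[of UNIV] by simp
  have s: "((\<lambda>x. x - y) has_derivative (\<lambda>h. h)) (at y)"
    by (intro derivative_eq_intros) auto
  have "(((\<lambda>h. g (y + h)) \<circ> (\<lambda>x. x - y)) has_derivative ((\<lambda>h. \<Sum>i\<in>UNIV. h$i * pd i g y) \<circ> (\<lambda>h. h))) (at y)"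
    using diff_chain_at[OF s] m by simp
  then show ?thesis by (simp add: o_def)
qed



definition allm :: "'a::finite list" where "allm = (SOME xs. distinct xs \<and> set xs = UNIV)"

lemma allm: "distinct (allm :: 'a::finite list)" "set (allm :: 'a::finite list) = UNIV"
proof -
  have "\<exists>xs :: 'a list. distinct xs \<and> set xs = UNIV" using finite_distinct_list[of "UNIV :: 'a set"] by auto
  from someI_ex[OF this] show "distinct (allm :: 'a::finite list)" "set (allm :: 'a::finite list) = UNIV"
    unfolding allm_def by auto
qed

lemma sum_list_allm: "sum_list (map f (allm :: 'a::finite list)) = (\<Sum>i\<in>UNIV. f i)"
proof -
  have "set (allm :: 'a list) = UNIV" by (rule allm(2))
  moreover have "sum_list (map f (allm :: 'a list)) = sum f (set (allm :: 'a list))"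
    by (rule sum_list_distinct_conv_sum_set[OF allm(1)])
  ultimately show ?thesis by simp
qed

type_synonym ('n,'m) trm = "'m list \<times> ('n list \<times> 'm) list"

definition vl :: "(real^'m::finite \<Rightarrow> real) \<Rightarrow> (real^'n::finite \<Rightarrow> real^'m) \<Rightarrow> ('n,'m) trm \<Rightarrow> real^'n \<Rightarrow> real" where
  "vl u F t x = dlist (fst t) u (F x) * prod_list (map (\<lambda>p. dlist (fst p) (\<lambda>y. F y $ snd p) x) (snd t))"

definition kids :: "'n \<Rightarrow> ('n,'m::finite) trm \<Rightarrow> ('n,'m) trm list" where
  "kids d t = map (\<lambda>m. (m # fst t, ([d], m) # snd t)) allm @
     map (\<lambda>l. (fst t, (snd t)[l := (d # fst (snd t ! l), snd (snd t ! l))])) [0..<length (snd t)]"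

primrec Tm :: "'n list \<Rightarrow> ('n,'m::finite) trm list" where
  "Tm [] = [([], [])]"
| "Tm (d # ds) = concat (map (kids d) (Tm ds))"

lemma DERIV_prod_list_upd:
  fixes \<phi> :: "'a \<Rightarrow> real \<Rightarrow> real"
  assumes "\<forall>p\<in>set ps. DERIV (\<phi> p) 0 :> \<phi> (\<delta> p) 0"
  shows "DERIV (\<lambda>t. prod_list (map (\<lambda>p. \<phi> p t) ps)) 0 :>
     (\<Sum>l<length ps. prod_list (map (\<lambda>p. \<phi> p 0) (ps[l := \<delta> (ps!l)])))"
  using assms
proof (induction ps)
  case Nil then show ?case by simp
next
  case (Cons p ps)
  have d1: "DERIV (\<phi> p) 0 :> \<phi> (\<delta> p) 0" using Cons.prems by simp
  have d2: "DERIV (\<lambda>t. prod_list (map (\<lambda>p. \<phi> p t) ps)) 0 :>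
     (\<Sum>l<length ps. prod_list (map (\<lambda>p. \<phi> p 0) (ps[l := \<delta> (ps!l)])))"
    using Cons by simp
  have "DERIV (\<lambda>t. \<phi> p t * prod_list (map (\<lambda>p. \<phi> p t) ps)) 0 :>
     \<phi> (\<delta> p) 0 * prod_list (map (\<lambda>p. \<phi> p 0) ps) +
     \<phi> p 0 * (\<Sum>l<length ps. prod_list (map (\<lambda>p. \<phi> p 0) (ps[l := \<delta> (ps!l)])))"
    using DERIV_mult[OF d1 d2] by (simp add: algebra_simps)
  then show ?case
    unfolding length_Cons sum.lessThan_Suc_shift by (simp add: sum_distrib_left)
qed

lemma sum_list_concat': "sum_list (concat xss) = sum_list (map sum_list (xss :: 'a::monoid_add list list))"
  by (induction xss) auto

lemma DERIV_sum_list: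
  fixes f :: "'a \<Rightarrow> real \<Rightarrow> real"
  assumes "\<forall>p\<in>set ps. DERIV (f p) x :> f' p"
  shows "DERIV (\<lambda>t. sum_list (map (\<lambda>p. f p t) ps)) x :> sum_list (map f' ps)"
  using assms by (induction ps) (auto intro!: derivative_eq_intros)

lemma line_vec_deriv:
  fixes F :: "real^'n::finite \<Rightarrow> real^'m::finite"
  assumes "\<And>j. ((\<lambda>s. F (x + s *\<^sub>R ax d) $ j) has_real_derivative V $ j) (at 0)"
  shows "((\<lambda>s. F (x + s *\<^sub>R ax d)) has_derivative (\<lambda>s. s *\<^sub>R V)) (at 0)"
proof -
  have "((\<lambda>s. F (x + s *\<^sub>R ax d) \<bullet> i) has_derivative (\<lambda>s. (s *\<^sub>R V) \<bullet> i)) (at 0 within UNIV)"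
    if "i \<in> Basis" for i
  proof -
    from that have "\<exists>j v. v \<in> (Basis::real set) \<and> i = axis j v" unfolding Basis_vec_def by blast
    then obtain j where j: "i = axis j 1" by auto
    have "((\<lambda>s. F (x + s *\<^sub>R ax d) $ j) has_derivative (\<lambda>s. V $ j * s)) (at 0)"
      using assms[of j] by (simp add: has_field_derivative_def)
    then show ?thesis using j by (simp add: inner_axis mult.commute)
  qed
  then show ?thesis using has_derivative_componentwise_within[of _ _ 0 UNIV] by blast
qed

lemma comp_line_DERIV:
  fixes F :: "real^'n::finite \<Rightarrow> real^'m::finite"
  assumes su: "smooth_on \<Omega>2 u" and op2: "open \<Omega>2"
    and sF: "\<And>j. smooth_on \<Omega>1 (\<lambda>y. F y $ j)" and x: "x \<in> \<Omega>1" and Fx: "F x \<in> \<Omega>2"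
  shows "DERIV (\<lambda>s. dlist es u (F (x + s *\<^sub>R ax d))) 0 :>
     (\<Sum>m\<in>UNIV. dlist (m # es) u (F x) * pd d (\<lambda>y. F y $ m) x)"
proof -
  define G where "G = dlist es u"
  have G: "(G has_derivative (\<lambda>h. \<Sum>m\<in>UNIV. h$m * pd m G (F x))) (at (F x))"
    unfolding G_def by (rule C1_frechet[OF smooth_on_dlist[OF su] op2 Fx])
  define V where "V = (\<chi> m. pd d (\<lambda>y. F y $ m) x)"
  have "((\<lambda>s. F (x + s *\<^sub>R ax d) $ j) has_real_derivative V $ j) (at 0)" for j
    using smooth_line0[OF sF x, of d] by (simp add: V_def)
  then have g: "((\<lambda>s. F (x + s *\<^sub>R ax d)) has_derivative (\<lambda>s. s *\<^sub>R V)) (at 0)"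
    by (rule line_vec_deriv)
  have "((G \<circ> (\<lambda>s. F (x + s *\<^sub>R ax d))) has_derivative
      ((\<lambda>h. \<Sum>m\<in>UNIV. h$m * pd m G (F x)) \<circ> (\<lambda>s. s *\<^sub>R V))) (at 0)"
    by (rule diff_chain_at[OF g]) (use G in simp)
  moreover have "((\<lambda>h. \<Sum>m\<in>UNIV. h$m * pd m G (F x)) \<circ> (\<lambda>s. s *\<^sub>R V)) =
      (*) (\<Sum>m\<in>UNIV. dlist (m # es) u (F x) * pd d (\<lambda>y. F y $ m) x)"
    by (auto simp: fun_eq_iff sum_distrib_left G_def V_def algebra_simps)
  ultimately show ?thesis by (simp add: has_field_derivative_def G_def o_def)
qed

lemma vl_DERIV:
  fixes F :: "real^'n::finite \<Rightarrow> real^'m::finite"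
  assumes su: "smooth_on \<Omega>2 u" and op2: "open \<Omega>2"
    and sF: "\<And>j. smooth_on \<Omega>1 (\<lambda>y. F y $ j)" and x: "x \<in> \<Omega>1" and Fx: "F x \<in> \<Omega>2"
  shows "DERIV (\<lambda>s. vl u F t (x + s *\<^sub>R ax d)) 0 :> sum_list (map (\<lambda>t'. vl u F t' x) (kids d t))"
proof -
  obtain es ps where t: "t = (es, ps)" by fastforce
  define \<phi> where "\<phi> p s = dlist (fst p) (\<lambda>y. F y $ snd p) (x + s *\<^sub>R ax d)" for p :: "'n list \<times> 'm" and s
  define \<delta> where "\<delta> p = (d # fst p, snd p)" for p :: "'n list \<times> 'm"
  have "\<forall>p\<in>set ps. DERIV (\<phi> p) 0 :> \<phi> (\<delta> p) 0"
    unfolding \<phi>_def \<delta>_def using smooth_line[OF sF x] by auto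
  from DERIV_prod_list_upd[OF this]
  have d2: "DERIV (\<lambda>s. prod_list (map (\<lambda>p. \<phi> p s) ps)) 0 :>
     (\<Sum>l<length ps. prod_list (map (\<lambda>p. \<phi> p 0) (ps[l := \<delta> (ps!l)])))" .
  note d1 = comp_line_DERIV[OF su op2 sF x Fx, of es d]
  have "DERIV (\<lambda>s. dlist es u (F (x + s *\<^sub>R ax d)) * prod_list (map (\<lambda>p. \<phi> p s) ps)) 0 :>
    (\<Sum>m\<in>UNIV. dlist (m # es) u (F x) * pd d (\<lambda>y. F y $ m) x) * prod_list (map (\<lambda>p. \<phi> p 0) ps)
    + dlist es u (F (x + 0 *\<^sub>R ax d)) * (\<Sum>l<length ps. prod_list (map (\<lambda>p. \<phi> p 0) (ps[l := \<delta> (ps!l)])))"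
    using DERIV_mult[OF d1 d2] by (simp add: algebra_simps)
  moreover have "(\<lambda>s. vl u F t (x + s *\<^sub>R ax d)) = (\<lambda>s. dlist es u (F (x + s *\<^sub>R ax d)) * prod_list (map (\<lambda>p. \<phi> p s) ps))"
    by (auto simp: vl_def t \<phi>_def fun_eq_iff)
  moreover have "sum_list (map (\<lambda>t'. vl u F t' x) (kids d t)) =
    (\<Sum>m\<in>UNIV. dlist (m # es) u (F x) * pd d (\<lambda>y. F y $ m) x) * prod_list (map (\<lambda>p. \<phi> p 0) ps)
    + dlist es u (F (x + 0 *\<^sub>R ax d)) * (\<Sum>l<length ps. prod_list (map (\<lambda>p. \<phi> p 0) (ps[l := \<delta> (ps!l)])))"
  proof -
    have a: "sum_list (map (\<lambda>t'. vl u F t' x) (map (\<lambda>m. (m # es, ([d], m) # ps)) allm)) =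
      (\<Sum>m\<in>UNIV. dlist (m # es) u (F x) * pd d (\<lambda>y. F y $ m) x) * prod_list (map (\<lambda>p. \<phi> p 0) ps)"
      by (simp add: o_def sum_list_allm vl_def \<phi>_def sum_distrib_right mult.assoc)
    have "map (\<lambda>p. dlist (fst p) (\<lambda>y. F y $ snd p) x) (ps[l := (d # fst (ps ! l), snd (ps ! l))])
        = map (\<lambda>p. \<phi> p 0) (ps[l := \<delta> (ps!l)])" for l
      by (simp add: \<phi>_def \<delta>_def)
    then have b: "sum_list (map (\<lambda>t'. vl u F t' x) (map (\<lambda>l. (es, ps[l := (d # fst (ps ! l), snd (ps ! l))])) [0..<length ps]))
      = dlist es u (F (x + 0 *\<^sub>R ax d)) * (\<Sum>l<length ps. prod_list (map (\<lambda>p. \<phi> p 0) (ps[l := \<delta> (ps!l)])))"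
      by (simp add: o_def vl_def interv_sum_list_conv_sum_set_nat atLeast0LessThan sum_distrib_left)
    show ?thesis unfolding kids_def t using a b by simp
  qed
  ultimately show ?thesis by simp
qed

lemma Tm_repr:
  fixes F :: "real^'n::finite \<Rightarrow> real^'m::finite"
  assumes su: "smooth_on \<Omega>2 u" and op2: "open \<Omega>2" and op1: "open \<Omega>1"
    and sF: "\<And>j. smooth_on \<Omega>1 (\<lambda>y. F y $ j)" and FO: "F ` \<Omega>1 \<subseteq> \<Omega>2"
  shows "x \<in> \<Omega>1 \<Longrightarrow> dlist ds (u \<circ> F) x = sum_list (map (\<lambda>t. vl u F t x) (Tm ds))"
proof (induction ds arbitrary: x)
  case Nil then show ?case by (simp add: vl_def)
next
  case (Cons d ds)
  have "dlist (d # ds) (u \<circ> F) x = pd d (dlist ds (u \<circ> F)) x" by simp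
  also have "\<dots> = pd d (\<lambda>x. sum_list (map (\<lambda>t. vl u F t x) (Tm ds))) x"
    by (rule pd_local[OF op1 Cons.prems]) (use Cons.IH in \<open>auto simp: o_def\<close>)
  also have "\<dots> = sum_list (map (\<lambda>t. sum_list (map (\<lambda>t'. vl u F t' x) (kids d t))) (Tm ds))"
  proof (rule pd_DERIV)
    have "\<forall>t\<in>set (Tm ds). DERIV (\<lambda>s. vl u F t (x + s *\<^sub>R ax d)) 0 :> sum_list (map (\<lambda>t'. vl u F t' x) (kids d t))"
      using vl_DERIV[OF su op2 sF Cons.prems] FO Cons.prems by auto
    from DERIV_sum_list[OF this] show "DERIV (\<lambda>t. sum_list (map (\<lambda>p. vl u F p (x + t *\<^sub>R ax d)) (Tm ds))) 0 :>
      sum_list (map (\<lambda>t. sum_list (map (\<lambda>t'. vl u F t' x) (kids d t))) (Tm ds))" by simp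
  qed
  also have "\<dots> = sum_list (map (\<lambda>t. vl u F t x) (Tm (d # ds)))"
    by (simp add: sum_list_concat' map_concat o_def)
  finally show ?case .
qed



lemma continuous_on_prod_list_map:
  fixes f :: "'a \<Rightarrow> 'b::topological_space \<Rightarrow> real"
  shows "(\<And>p. p \<in> set ps \<Longrightarrow> continuous_on S (f p)) \<Longrightarrow> continuous_on S (\<lambda>x. prod_list (map (\<lambda>p. f p x) ps))"
  by (induction ps) (auto intro!: continuous_intros)

lemma continuous_on_sum_list_map:
  fixes f :: "'a \<Rightarrow> 'b::topological_space \<Rightarrow> real"
  shows "(\<And>p. p \<in> set ps \<Longrightarrow> continuous_on S (f p)) \<Longrightarrow> continuous_on S (\<lambda>x. sum_list (map (\<lambda>p. f p x) ps))"
  by (induction ps) (auto intro!: continuous_intros)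

lemma smooth_vec_cont:
  fixes F :: "real^'n::finite \<Rightarrow> real^'m::finite"
  assumes sF: "\<And>j. smooth_on \<Omega>1 (\<lambda>y. F y $ j)"
  shows "continuous_on \<Omega>1 F"
proof -
  have "continuous_on \<Omega>1 (\<lambda>x. \<chi> j. F x $ j)"
    using smooth_cont[OF sF, of "[]"] by (intro continuous_on_vec_lambda) simp
  then show ?thesis by simp
qed

lemma comp_smooth:
  fixes F :: "real^'n::finite \<Rightarrow> real^'m::finite"
  assumes su: "smooth_on \<Omega>2 u" and op2: "open \<Omega>2" and op1: "open \<Omega>1"
    and sF: "\<And>j. smooth_on \<Omega>1 (\<lambda>y. F y $ j)" and FO: "F ` \<Omega>1 \<subseteq> \<Omega>2"
  shows "smooth_on \<Omega>1 (u \<circ> F)"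
  unfolding smooth_on_def
proof (intro allI conjI ballI)
  fix ds :: "'n list"
  note R = Tm_repr[OF su op2 op1 sF FO]
  have cF: "continuous_on \<Omega>1 F" by (rule smooth_vec_cont[OF sF])
  have "continuous_on \<Omega>1 (\<lambda>x. vl u F t x)" for t :: "('n,'m) trm"
    unfolding vl_def
    by (intro continuous_intros continuous_on_prod_list_map smooth_cont[OF sF]
         continuous_on_compose2[OF smooth_cont[OF su] cF FO])
  then have "continuous_on \<Omega>1 (\<lambda>x. sum_list (map (\<lambda>t. vl u F t x) (Tm ds)))"
    by (intro continuous_on_sum_list_map)
  then show "continuous_on \<Omega>1 (dlist ds (u \<circ> F))"
    by (rule continuous_on_eq) (use R in auto)
  fix i x assume x: "x \<in> \<Omega>1"
  have "\<forall>t\<in>set (Tm ds). DERIV (\<lambda>s. vl u F t (x + s *\<^sub>R ax i)) 0 :> sum_list (map (\<lambda>t'. vl u F t' x) (kids i t))"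
    using vl_DERIV[OF su op2 sF x] FO x by auto
  from DERIV_sum_list[OF this]
  have D: "DERIV (\<lambda>s. sum_list (map (\<lambda>t. vl u F t (x + s *\<^sub>R ax i)) (Tm ds))) 0 :>
      sum_list (map (\<lambda>t. sum_list (map (\<lambda>t'. vl u F t' x) (kids i t))) (Tm ds))" .
  have ev: "\<forall>\<^sub>F s in nhds 0. dlist ds (u \<circ> F) (x + s *\<^sub>R ax i) = sum_list (map (\<lambda>t. vl u F t (x + s *\<^sub>R ax i)) (Tm ds))"
    using ev_line_in_open[OF op1 x, of "ax i"] by eventually_elim (use R in auto)
  have "DERIV (\<lambda>s. dlist ds (u \<circ> F) (x + s *\<^sub>R ax i)) 0 :>
      sum_list (map (\<lambda>t. sum_list (map (\<lambda>t'. vl u F t' x) (kids i t))) (Tm ds))"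
    using DERIV_cong_ev[OF refl ev refl] D by blast
  then show "(\<lambda>s. dlist ds (u \<circ> F) (x + s *\<^sub>R ax i)) differentiable (at 0)"
    using real_differentiable_def by blast
qed

definition lsum :: "('n list \<times> 'm) list \<Rightarrow> nat" where
  "lsum ps = sum_list (map (\<lambda>p. length (fst p)) ps)"

lemma sum_list_map_update_nat:
  fixes f :: "'a \<Rightarrow> nat"
  shows "l < length xs \<Longrightarrow> sum_list (map f (xs[l := y])) + f (xs ! l) = sum_list (map f xs) + f y"
  by (induction xs arbitrary: l) (auto split: nat.splits)

lemma Tm_inv:
  "t \<in> set (Tm ds) \<Longrightarrow> length (fst t) = length (snd t) \<and> lsum (snd t) = length ds \<and> (\<forall>p\<in>set (snd t). fst p \<noteq> [])"
proof (induction ds arbitrary: t)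
  case Nil then show ?case by (simp add: lsum_def)
next
  case (Cons d ds)
  from Cons.prems obtain t0 where t0: "t0 \<in> set (Tm ds)" "t \<in> set (kids d t0)" by auto
  note I = Cons.IH[OF t0(1)]
  obtain es ps where e: "t0 = (es, ps)" by fastforce
  from t0(2) consider (a) m where "t = (m # es, ([d], m) # ps)"
    | (b) l where "l < length ps" "t = (es, ps[l := (d # fst (ps ! l), snd (ps ! l))])"
    unfolding kids_def e by auto
  then show ?case
  proof cases
    case a then show ?thesis using I e by (auto simp: lsum_def)
  next
    case b
    have "lsum (ps[l := (d # fst (ps ! l), snd (ps ! l))]) + length (fst (ps ! l)) = lsum ps + Suc (length (fst (ps ! l)))"
      unfolding lsum_def using sum_list_map_update_nat[OF b(1), of "\<lambda>p. length (fst p)"] by simp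
    then have "lsum (ps[l := (d # fst (ps ! l), snd (ps ! l))]) = Suc (lsum ps)" by simp
    moreover have "\<forall>p\<in>set (ps[l := (d # fst (ps ! l), snd (ps ! l))]). fst p \<noteq> []"
      using I e by (auto dest!: set_update_subset_insert[THEN subsetD])
    ultimately show ?thesis using I e b by auto
  qed
qed

lemma lsum_ge_length: "(\<forall>p\<in>set ps. fst p \<noteq> []) \<Longrightarrow> length ps \<le> lsum ps"
proof (induction ps)
  case Nil then show ?case by (simp add: lsum_def)
next
  case (Cons p ps)
  then have "length ps \<le> lsum ps" "length (fst p) \<ge> 1" by (auto simp: Suc_le_eq)
  then show ?case by (simp add: lsum_def)
qed



definition bw :: "real \<Rightarrow> real \<Rightarrow> nat \<Rightarrow> real" where "bw C R l = C * R^l * fact l"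

definition wt :: "(nat \<Rightarrow> real) \<Rightarrow> ('n,'m) trm \<Rightarrow> real" where
  "wt b t = prod_list (map (\<lambda>p. b (length (fst p))) (snd t))"

definition Sj :: "'m::finite itself \<Rightarrow> (nat \<Rightarrow> real) \<Rightarrow> 'n list \<Rightarrow> nat \<Rightarrow> real" where
  "Sj _ b ds j = sum_list (map (\<lambda>t. if length (fst t) = j then wt b t else 0) (Tm ds :: ('n,'m) trm list))"

fun Lah :: "nat \<Rightarrow> nat \<Rightarrow> real" where
  "Lah 0 j = (if j = 0 then 1 else 0)"
| "Lah (Suc k) j = (if j = 0 then 0 else Lah k (j - 1)) + (k + j) * Lah k j"

lemma prod_list_map_update:
  fixes f :: "'a \<Rightarrow> 'b::comm_monoid_mult"
  shows "l < length xs \<Longrightarrow> prod_list (map f (xs[l := y])) * f (xs ! l) = prod_list (map f xs) * f y"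
  by (induction xs arbitrary: l) (auto split: nat.splits simp: ac_simps)

lemma length_allm: "length (allm :: 'a::finite list) = CARD('a)"
  using distinct_card[OF allm(1)] allm(2) by metis

lemma bw_pos: "(C::real) > 0 \<Longrightarrow> R > 0 \<Longrightarrow> bw C R l > 0"
  by (simp add: bw_def)

lemma bw_Suc: "bw C R (Suc l) = R * (Suc l) * bw C R l"
  by (simp add: bw_def algebra_simps)

lemma kids_sum:
  fixes t :: "('n,'m::finite) trm" and C R :: real
  assumes inv: "length (fst t) = length (snd t)" "lsum (snd t) = k" and CR: "C > 0" "R > 0"
  shows "sum_list (map (\<lambda>t'. if length (fst t') = j then wt (bw C R) t' else 0) (kids d t))
    = (if Suc (length (fst t)) = j then CARD('m) * (C * R) * wt (bw C R) t else 0)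
      + (if length (fst t) = j then R * real (k + j) * wt (bw C R) t else 0)"
proof -
  obtain es ps where t: "t = (es, ps)" by fastforce
  let ?b = "bw C R"
  let ?f = "\<lambda>p::'n list \<times> 'm. ?b (length (fst p))"
  have a: "sum_list (map (\<lambda>t'. if length (fst t') = j then wt ?b t' else 0)
      (map (\<lambda>m. (m # es, ([d], m) # ps)) (allm :: 'm list)))
      = (if Suc (length es) = j then CARD('m) * (C * R) * wt ?b t else 0)"
  proof -
    have "sum_list (map (\<lambda>t'. if length (fst t') = j then wt ?b t' else 0)
      (map (\<lambda>m. (m # es, ([d], m) # ps)) (allm :: 'm list)))
      = sum_list (map (\<lambda>m. if Suc (length es) = j then (C * R) * wt ?b t else 0) (allm :: 'm list))"
      by (simp add: o_def wt_def t bw_def)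
    also have "\<dots> = (if Suc (length es) = j then CARD('m) * (C * R) * wt ?b t else 0)"
      by (simp add: sum_list_triv length_allm)
    finally show ?thesis .
  qed
  have upd: "wt ?b (es, ps[l := (d # fst (ps ! l), snd (ps ! l))]) = R * (Suc (length (fst (ps ! l)))) * wt ?b t"
    if l: "l < length ps" for l
  proof -
    have "prod_list (map ?f (ps[l := (d # fst (ps ! l), snd (ps ! l))])) * ?f (ps ! l)
        = prod_list (map ?f ps) * ?f (d # fst (ps ! l), snd (ps ! l))"
      by (rule prod_list_map_update[OF l])
    also have "\<dots> = prod_list (map ?f ps) * (R * (Suc (length (fst (ps ! l))))) * ?f (ps ! l)"
      by (simp add: bw_Suc algebra_simps)
    finally have "prod_list (map ?f (ps[l := (d # fst (ps ! l), snd (ps ! l))])) = 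
        prod_list (map ?f ps) * (R * (Suc (length (fst (ps ! l)))))"
      using bw_pos[OF CR] by (metis mult_right_cancel less_irrefl)
    then show ?thesis by (simp add: wt_def t)
  qed
  have b: "sum_list (map (\<lambda>t'. if length (fst t') = j then wt ?b t' else 0)
      (map (\<lambda>l. (es, ps[l := (d # fst (ps ! l), snd (ps ! l))])) [0..<length ps]))
      = (if length es = j then R * real (k + j) * wt ?b t else 0)"
  proof (cases "length es = j")
    case True
    have "sum_list (map (\<lambda>t'. if length (fst t') = j then wt ?b t' else 0)
      (map (\<lambda>l. (es, ps[l := (d # fst (ps ! l), snd (ps ! l))])) [0..<length ps]))
      = (\<Sum>l<length ps. R * (Suc (length (fst (ps ! l)))) * wt ?b t)"
      using True upd by (simp add: o_def interv_sum_list_conv_sum_set_nat atLeast0LessThan)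
    also have "\<dots> = R * wt ?b t * (\<Sum>l<length ps. real (Suc (length (fst (ps ! l)))))"
      by (simp add: sum_distrib_left algebra_simps)
    also have "(\<Sum>l<length ps. real (Suc (length (fst (ps ! l))))) = real (lsum ps + length ps)"
    proof -
      have "lsum ps = (\<Sum>l<length ps. length (fst (ps ! l)))"
        unfolding lsum_def by (simp add: sum_list_sum_nth atLeast0LessThan)
      then show ?thesis by (simp add: sum.distrib)
    qed
    finally show ?thesis using True inv t by (simp add: algebra_simps)
  next
    case False then show ?thesis by (simp add: sum_list_triv o_def)
  qed
  show ?thesis unfolding kids_def t using a b t by simp
qed

lemma sum_list_if_add:
  fixes f g :: "'a \<Rightarrow> real"
  shows "sum_list (map (\<lambda>x. f x + g x) xs) = sum_list (map f xs) + sum_list (map g xs)"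
  by (induction xs) auto

lemma sum_list_cmult:
  fixes f :: "'a \<Rightarrow> real"
  shows "sum_list (map (\<lambda>x. c * f x) xs) = c * sum_list (map f xs)"
  by (induction xs) (auto simp: algebra_simps)

lemma Sj_rec:
  fixes C R :: real and ds :: "'n list"
  assumes CR: "C > 0" "R > 0"
  shows "Sj (TYPE('m::finite)) (bw C R) (d # ds) j =
    (if j = 0 then 0 else CARD('m) * (C * R) * Sj (TYPE('m)) (bw C R) ds (j - 1))
    + R * real (length ds + j) * Sj (TYPE('m)) (bw C R) ds j"
proof -
  let ?b = "bw C R"
  let ?g = "\<lambda>t::('n,'m) trm. if length (fst t) = j then wt ?b t else 0"
  have "Sj (TYPE('m)) ?b (d # ds) j = sum_list (map (\<lambda>t. sum_list (map ?g (kids d t))) (Tm ds :: ('n,'m) trm list))"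
    unfolding Sj_def by (simp add: sum_list_concat' map_concat o_def)
  also have "\<dots> = sum_list (map (\<lambda>t. (if Suc (length (fst t)) = j then CARD('m) * (C * R) * wt ?b t else 0)
      + (if length (fst t) = j then R * real (length ds + j) * wt ?b t else 0)) (Tm ds :: ('n,'m) trm list))"
  proof (rule arg_cong[where f=sum_list], rule map_cong[OF refl])
    fix t :: "('n,'m) trm" assume "t \<in> set (Tm ds)"
    from Tm_inv[OF this] show "sum_list (map ?g (kids d t)) = (if Suc (length (fst t)) = j then CARD('m) * (C * R) * wt ?b t else 0)
      + (if length (fst t) = j then R * real (length ds + j) * wt ?b t else 0)"
      by (intro kids_sum CR) auto
  qed
  also have "\<dots> = sum_list (map (\<lambda>t. (if Suc (length (fst t)) = j then CARD('m) * (C * R) * wt ?b t else 0)) (Tm ds :: ('n,'m) trm list))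
     + sum_list (map (\<lambda>t. R * real (length ds + j) * ?g t) (Tm ds :: ('n,'m) trm list))"
    by (subst sum_list_if_add) (auto intro!: arg_cong2[where f="(+)"] arg_cong[where f=sum_list])
  also have "sum_list (map (\<lambda>t. R * real (length ds + j) * ?g t) (Tm ds :: ('n,'m) trm list)) = R * real (length ds + j) * Sj (TYPE('m)) ?b ds j"
    unfolding Sj_def by (rule sum_list_cmult)
  also have "sum_list (map (\<lambda>t. (if Suc (length (fst t)) = j then CARD('m) * (C * R) * wt ?b t else 0)) (Tm ds :: ('n,'m) trm list))
      = (if j = 0 then 0 else CARD('m) * (C * R) * Sj (TYPE('m)) (bw C R) ds (j - 1))"
  proof (cases j)
    case 0 then show ?thesis by (simp add: sum_list_triv)
  next
    case (Suc j')
    have "sum_list (map (\<lambda>t. (if Suc (length (fst t)) = j then CARD('m) * (C * R) * wt ?b t else 0)) (Tm ds :: ('n,'m) trm list))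
      = sum_list (map (\<lambda>t. CARD('m) * (C * R) * (if length (fst t) = j' then wt ?b t else 0)) (Tm ds :: ('n,'m) trm list))"
      using Suc by (intro arg_cong[where f=sum_list] map_cong) auto
    also have "\<dots> = CARD('m) * (C * R) * Sj (TYPE('m)) (bw C R) ds j'"
      unfolding Sj_def by (rule sum_list_cmult)
    finally show ?thesis using Suc by simp
  qed
  finally show ?thesis by simp
qed

lemma Sj_closed:
  fixes C R :: real and ds :: "'n list"
  assumes CR: "C > 0" "R > 0"
  shows "Sj (TYPE('m::finite)) (bw C R) ds j = (CARD('m) * C)^j * R^(length ds) * Lah (length ds) j"
proof (induction ds arbitrary: j)
  case Nil
  show ?case by (simp add: Sj_def wt_def)
next
  case (Cons d ds)
  show ?case
  proof (cases j)
    case 0 then show ?thesis using Sj_rec[where 'm='m, OF CR, of d ds j] Cons.IH by simp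
  next
    case (Suc j')
    then show ?thesis using Sj_rec[where 'm='m, OF CR, of d ds j] Cons.IH[of j'] Cons.IH[of j]
      by (simp add: algebra_simps)
  qed
qed

lemma Lah_zero: "j > k \<Longrightarrow> Lah k j = 0"
  by (induction k arbitrary: j) auto

lemma Lah_nonneg: "Lah k j \<ge> 0"
  by (induction k arbitrary: j) auto

lemma Lah_bound: "Lah k j * fact j \<le> (3::real)^k * fact k"
proof (induction k arbitrary: j)
  case 0 then show ?case by simp
next
  case (Suc k)
  show ?case
  proof (cases "j > Suc k")
    case True then show ?thesis using Lah_zero[OF True] by simp
  next
    case False
    show ?thesis
    proof (cases j)
      case 0
      then have "Lah (Suc k) j * fact j = k * (Lah k 0 * fact 0)" by simp
      also have "\<dots> \<le> real k * ((3::real)^k * fact k)" using Suc.IH[of 0] by (intro mult_left_mono) auto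
      also have "\<dots> \<le> (3::real)^Suc k * fact (Suc k)" by (simp add: algebra_simps)
      finally show ?thesis .
    next
      case (Suc j')
      have "Lah (Suc k) j * fact j = j * (Lah k j' * fact j') + (k + j) * (Lah k j * fact j)"
        using Suc by (simp add: algebra_simps)
      also have "\<dots> \<le> real j * ((3::real)^k * fact k) + real (k + j) * ((3::real)^k * fact k)"
        using Suc.IH[of j'] Suc.IH[of j] by (intro add_mono mult_left_mono) auto
      also have "\<dots> = real (k + 2 * j) * ((3::real)^k * fact k)" by (simp add: algebra_simps)
      also have "\<dots> \<le> real (3 * (k + 1)) * ((3::real)^k * fact k)"
        using False by (intro mult_right_mono) auto
      also have "\<dots> = (3::real)^Suc k * fact (Suc k)" by (simp add: algebra_simps)
      finally show ?thesis .
    qed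
  qed
qed



lemma abs_prod_list_le:
  fixes f g :: "'a \<Rightarrow> real"
  shows "(\<And>p. p \<in> set ps \<Longrightarrow> \<bar>f p\<bar> \<le> g p) \<Longrightarrow> \<bar>prod_list (map f ps)\<bar> \<le> prod_list (map g ps)"
proof (induction ps)
  case Nil then show ?case by simp
next
  case (Cons p ps)
  have a: "\<bar>f p\<bar> \<le> g p" and b: "\<bar>prod_list (map f ps)\<bar> \<le> prod_list (map g ps)" using Cons by auto
  have "\<bar>prod_list (map f (p # ps))\<bar> = \<bar>f p\<bar> * \<bar>prod_list (map f ps)\<bar>" by (simp add: abs_mult)
  also have "\<dots> \<le> g p * prod_list (map g ps)"
    by (rule mult_mono[OF a b]) (use a in auto)
  finally show ?case by simp
qed

lemma sum_list_sum_swap: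
  fixes g :: "'a \<Rightarrow> 'b \<Rightarrow> real"
  shows "sum_list (map (\<lambda>t. \<Sum>j\<in>A. g t j) xs) = (\<Sum>j\<in>A. sum_list (map (\<lambda>t. g t j) xs))"
  by (induction xs) (auto simp: sum.distrib)

lemma comp_bound:
  fixes F :: "real^'n::finite \<Rightarrow> real^'m::finite" and C R :: real and ds :: "'n list"
  assumes rep: "dlist ds (u \<circ> F) x = sum_list (map (\<lambda>t. vl u F t x) (Tm ds))"
    and Ub: "\<And>es. \<bar>dlist es u (F x)\<bar> \<le> U (length es)"
    and Fb: "\<And>fs j. fs \<noteq> [] \<Longrightarrow> \<bar>dlist fs (\<lambda>y. F y $ j) x\<bar> \<le> bw C R (length fs)"
    and CR: "C > 0" "R > 0"
  shows "\<bar>dlist ds (u \<circ> F) x\<bar> \<le>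
    (\<Sum>j\<le>length ds. U j * ((CARD('m) * C)^j * R^(length ds) * Lah (length ds) j))"
proof -
  let ?k = "length ds"
  let ?b = "bw C R"
  have "\<bar>dlist ds (u \<circ> F) x\<bar> \<le> sum_list (map (\<lambda>t. \<bar>vl u F t x\<bar>) (Tm ds :: ('n,'m) trm list))"
    using rep sum_list_abs[of "map (\<lambda>t. vl u F t x) (Tm ds)"] by (simp add: o_def)
  also have "\<dots> \<le> sum_list (map (\<lambda>t. U (length (fst t)) * wt ?b t) (Tm ds :: ('n,'m) trm list))"
  proof (rule sum_list_mono)
    fix t :: "('n,'m) trm" assume t: "t \<in> set (Tm ds)"
    have ne: "\<forall>p\<in>set (snd t). fst p \<noteq> []" using Tm_inv[OF t] by blast
    have P: "\<bar>prod_list (map (\<lambda>p. dlist (fst p) (\<lambda>y. F y $ snd p) x) (snd t))\<bar> \<le> wt ?b t"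
      unfolding wt_def by (rule abs_prod_list_le) (use ne Fb in auto)
    have U: "\<bar>dlist (fst t) u (F x)\<bar> \<le> U (length (fst t))" by (rule Ub)
    have "\<bar>vl u F t x\<bar> = \<bar>dlist (fst t) u (F x)\<bar> * \<bar>prod_list (map (\<lambda>p. dlist (fst p) (\<lambda>y. F y $ snd p) x) (snd t))\<bar>"
      by (simp add: vl_def abs_mult)
    also have "\<dots> \<le> U (length (fst t)) * wt ?b t"
      by (rule mult_mono[OF U P]) (use U in auto)
    finally show "\<bar>vl u F t x\<bar> \<le> U (length (fst t)) * wt ?b t" .
  qed
  also have "\<dots> = sum_list (map (\<lambda>t. \<Sum>j\<le>?k. U j * (if length (fst t) = j then wt ?b t else 0)) (Tm ds :: ('n,'m) trm list))"
  proof (rule arg_cong[where f=sum_list], rule map_cong[OF refl])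
    fix t :: "('n,'m) trm" assume t: "t \<in> set (Tm ds)"
    have "length (fst t) \<le> ?k" using Tm_inv[OF t] lsum_ge_length[of "snd t"] by auto
    then show "U (length (fst t)) * wt ?b t = (\<Sum>j\<le>?k. U j * (if length (fst t) = j then wt ?b t else 0))"
      by (simp add: if_distrib sum.delta cong: if_cong)
  qed
  also have "\<dots> = (\<Sum>j\<le>?k. U j * Sj (TYPE('m)) ?b ds j)"
    unfolding sum_list_sum_swap Sj_def by (simp add: sum_list_cmult)
  also have "\<dots> = (\<Sum>j\<le>?k. U j * ((CARD('m) * C)^j * R^?k * Lah ?k j))"
    by (intro sum.cong refl) (simp add: Sj_closed[where 'm='m, OF CR, of ds])
  finally show ?thesis .
qed



lemma ws_quot_ge1:
  assumes ws: "weight_sequence M"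
  shows "quot_seq M (Suc k) \<ge> 1"
proof (induction k)
  case 0 then show ?case using ws by (simp add: weight_sequence_def)
next
  case (Suc k)
  have "quot_seq M (Suc k) \<le> quot_seq M (Suc (Suc k))" using ws by (simp add: weight_sequence_def)
  then show ?case using Suc by simp
qed

lemma ws_pos:
  assumes ws: "weight_sequence M"
  shows "M k > 0"
proof (induction k)
  case 0 then show ?case using ws by (simp add: weight_sequence_def)
next
  case (Suc k)
  have "M (Suc k) = quot_seq M (Suc k) * M k" using Suc by (simp add: quot_seq_def)
  then show ?case using Suc ws_quot_ge1[OF ws, of k] by simp
qed

lemma ws_quot_mono:
  assumes ws: "weight_sequence M" and "1 \<le> a" "a \<le> b"
  shows "quot_seq M a \<le> quot_seq M b"
  using assms(3)
proof (induction b rule: dec_induct)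
  case base then show ?case by simp
next
  case (step n)
  have "quot_seq M n \<le> quot_seq M (Suc n)" using ws assms(2) step.hyps(1) by (simp add: weight_sequence_def)
  then show ?case using step by simp
qed

lemma ws_Suc: "weight_sequence M \<Longrightarrow> M (Suc k) = quot_seq M (Suc k) * M k"
  using ws_pos[of M k] by (simp add: quot_seq_def)

lemma ws_logconv:
  assumes ws: "weight_sequence M"
  shows "M j * M l \<le> M (j + l)"
proof (induction j)
  case 0 then show ?case using ws by (simp add: weight_sequence_def)
next
  case (Suc j)
  have q: "quot_seq M (Suc j) \<le> quot_seq M (Suc (j + l))" by (rule ws_quot_mono[OF ws]) auto
  have "M (Suc j) * M l = quot_seq M (Suc j) * (M j * M l)" using ws_Suc[OF ws, of j] by simp
  also have "\<dots> \<le> quot_seq M (Suc (j + l)) * M (j + l)"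
    by (rule mult_mono[OF q Suc]) (use ws_quot_ge1[OF ws, of j] ws_quot_ge1[OF ws, of "j+l"] ws_pos[OF ws] in \<open>auto intro: mult_nonneg_nonneg less_imp_le\<close>)
  also have "\<dots> = M (Suc j + l)" using ws_Suc[OF ws, of "j + l"] by simp
  finally show ?case .
qed

lemma m_lower:
  assumes ws: "weight_sequence M"
    and lim: "filterlim (\<lambda>k. (M k / fact k) powr (1 / real k)) at_top sequentially"
    and e: "\<epsilon> > 0"
  shows "\<exists>D\<ge>0. \<forall>l. fact l / M l \<le> D * \<epsilon>^l"
proof -
  have "\<forall>\<^sub>F k in sequentially. (M k / fact k) powr (1 / real k) \<ge> 1 / \<epsilon>"
    using lim by (simp add: filterlim_at_top)
  then obtain N where N: "\<And>k. k \<ge> N \<Longrightarrow> (M k / fact k) powr (1 / real k) \<ge> 1 / \<epsilon>"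
    unfolding eventually_sequentially by blast
  have big: "fact k / M k \<le> \<epsilon>^k" if k: "k \<ge> Suc N" for k
  proof -
    have pos: "M k / fact k > 0" using ws_pos[OF ws] by simp
    have kp: "k > 0" using k by simp
    have "(1/\<epsilon>)^k \<le> ((M k / fact k) powr (1 / real k))^k"
      by (rule power_mono) (use N[of k] k e in auto)
    also have "\<dots> = (M k / fact k) powr (real k * (1 / real k))"
      by (rule powr_power) (use ws_pos[OF ws, of k] in simp)
    also have "\<dots> = M k / fact k"
      using pos kp ws_pos[OF ws, of k] by simp
    finally have "(1/\<epsilon>)^k \<le> M k / fact k" .
    then have "1 \<le> \<epsilon>^k * (M k / fact k)" using e by (simp add: power_one_over field_simps)
    then show ?thesis using ws_pos[OF ws, of k] e by (simp add: field_simps)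
  qed
  define D where "D = max 1 (Max ((\<lambda>l. (fact l / M l) / \<epsilon>^l) ` {..N}))"
  have "fact l / M l \<le> D * \<epsilon>^l" for l
  proof (cases "l \<ge> Suc N")
    case True
    have "D \<ge> 1" by (simp add: D_def)
    then show ?thesis using big[OF True] e
      by (smt (verit) mult_le_cancel_right1 zero_less_power)
  next
    case False
    then have "(fact l / M l) / \<epsilon>^l \<le> D" unfolding D_def by (intro max.coboundedI2 Max_ge) auto
    then show ?thesis using e ws_pos[OF ws, of l] by (simp add: field_simps)
  qed
  moreover have "D \<ge> 0" by (simp add: D_def)
  ultimately show ?thesis by blast
qed

lemma final_arith:
  fixes Cu D \<rho> A R \<epsilon> lam :: real
  assumes ws: "weight_sequence M" and Cu: "Cu \<ge> 0" and D: "D \<ge> 0"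
    and pos: "\<rho> > 0" "A > 0" "R > 0" "\<epsilon> > 0"
    and lam: "\<rho> * A \<le> lam" "\<epsilon> \<le> lam"
    and hm: "\<And>l. fact l / M l \<le> D * \<epsilon>^l"
  shows "(\<Sum>j\<le>k. (Cu * \<rho>^j * M j) * (A^j * R^k * Lah k j)) \<le> Cu * D * (12 * R * lam)^k * M k"
proof -
  have Mpos: "M i > 0" for i using ws_pos[OF ws] .
  have lam0: "lam > 0" using pos lam by linarith
  have termb: "(Cu * \<rho>^j * M j) * (A^j * R^k * Lah k j) \<le> Cu * D * (6 * R * lam)^k * M k"
    if j: "j \<le> k" for j
  proof -
    have f1: "Lah k j \<le> 3^k * (fact k / fact j)"
      using Lah_bound[of k j] by (simp add: field_simps)
    have f2: "fact k / fact j \<le> (2::real)^k * fact (k - j)"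
    proof -
      have "fact k = fact j * fact (k - j) * real (k choose j)"
        using binomial_fact_lemma[OF j] by (metis of_nat_fact of_nat_mult)
      moreover have "real (k choose j) \<le> 2^k" using binomial_le_pow2[of k j]
        by (metis of_nat_le_iff of_nat_numeral of_nat_power)
      ultimately show ?thesis by (simp add: field_simps)
    qed
    have f3: "fact (k - j) * M j \<le> D * \<epsilon>^(k - j) * M k"
    proof -
      have "fact (k - j) * M j = (fact (k - j) / M (k - j)) * (M j * M (k - j))"
        using Mpos[of "k-j"] by (simp add: field_simps)
      also have "\<dots> \<le> (D * \<epsilon>^(k - j)) * M k"
        using ws_logconv[OF ws, of j "k - j"] j hm[of "k - j"] Mpos D pos
        by (intro mult_mono) (auto intro: mult_nonneg_nonneg less_imp_le)
      finally show ?thesis by simp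
    qed
    have LM: "Lah k j * M j \<le> 6^k * (D * \<epsilon>^(k - j) * M k)"
    proof -
      have "Lah k j * M j \<le> 3^k * (fact k / fact j) * M j"
        using f1 Mpos[of j] by (intro mult_right_mono) auto
      also have "\<dots> \<le> 3^k * ((2::real)^k * fact (k - j)) * M j"
        using f2 Mpos[of j] by (intro mult_right_mono mult_left_mono) auto
      also have "\<dots> = 6^k * (fact (k - j) * M j)"
        by (simp add: power_mult_distrib[symmetric])
      also have "\<dots> \<le> 6^k * (D * \<epsilon>^(k - j) * M k)"
        using f3 by (intro mult_left_mono) auto
      finally show ?thesis .
    qed
    have pw: "(\<rho> * A)^j * \<epsilon>^(k - j) \<le> lam^k"
    proof -
      have "(\<rho> * A)^j * \<epsilon>^(k - j) \<le> lam^j * lam^(k - j)"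
        using pos lam by (intro mult_mono power_mono) auto
      also have "\<dots> = lam^k" using j by (simp add: power_add[symmetric])
      finally show ?thesis .
    qed
    have "(Cu * \<rho>^j * M j) * (A^j * R^k * Lah k j) = Cu * R^k * (\<rho> * A)^j * (Lah k j * M j)"
      by (simp add: power_mult_distrib algebra_simps)
    also have "\<dots> \<le> Cu * R^k * (\<rho> * A)^j * (6^k * (D * \<epsilon>^(k - j) * M k))"
      using LM Cu pos by (intro mult_left_mono) auto
    also have "\<dots> = Cu * D * R^k * 6^k * M k * ((\<rho> * A)^j * \<epsilon>^(k - j))"
      by (simp add: algebra_simps)
    also have "\<dots> \<le> Cu * D * R^k * 6^k * M k * lam^k"
      using pw Cu D pos Mpos[of k] by (intro mult_left_mono) auto
    also have "\<dots> = Cu * D * (6 * R * lam)^k * M k"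
      by (simp add: power_mult_distrib algebra_simps)
    finally show ?thesis .
  qed
  have "(\<Sum>j\<le>k. (Cu * \<rho>^j * M j) * (A^j * R^k * Lah k j)) \<le> (\<Sum>j\<le>k. Cu * D * (6 * R * lam)^k * M k)"
    by (rule sum_mono) (use termb in auto)
  also have "\<dots> = real (Suc k) * (Cu * D * (6 * R * lam)^k * M k)" by simp
  also have "\<dots> \<le> 2^k * (Cu * D * (6 * R * lam)^k * M k)"
  proof (rule mult_right_mono)
    have "Suc k \<le> 2^k" by (induction k) auto
    then show "real (Suc k) \<le> 2^k" by (metis of_nat_le_iff of_nat_numeral of_nat_power)
    show "0 \<le> Cu * D * (6 * R * lam)^k * M k" using Cu D pos lam0 Mpos[of k] by simp
  qed
  also have "\<dots> = Cu * D * ((2 * 6) * R * lam)^k * M k" by (simp only: power_mult_distrib mult_ac)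
  also have "\<dots> = Cu * D * (12 * R * lam)^k * M k" by simp
  finally show ?thesis .
qed



lemma summable_sums_reindex:
  fixes g :: "'a \<Rightarrow> real"
  assumes "g summable_on UNIV" "bij_betw e (UNIV::nat set) (UNIV::'a set)"
  shows "(\<lambda>n. g (e n)) sums infsum g UNIV"
proof -
  have "(g has_sum infsum g UNIV) UNIV" using assms(1) by simp
  then have "((\<lambda>n. g (e n)) has_sum infsum g UNIV) UNIV"
    using has_sum_reindex_bij_betw[OF assms(2)] by blast
  then show ?thesis by (rule has_sum_imp_sums)
qed

lemma infsum_DERIV:
  fixes f f' :: "'a::countable \<Rightarrow> real \<Rightarrow> real"
  assumes inf: "infinite (UNIV::'a set)" and d: "\<delta> > 0"
    and der: "\<And>\<alpha> x. \<bar>x\<bar> < \<delta> \<Longrightarrow> DERIV (f \<alpha>) x :> f' \<alpha> x"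
    and bd: "\<And>\<alpha> x. \<bar>x\<bar> < \<delta> \<Longrightarrow> \<bar>f' \<alpha> x\<bar> \<le> B \<alpha>" and B: "B summable_on UNIV"
    and sm: "\<And>x. \<bar>x\<bar> < \<delta> \<Longrightarrow> (\<lambda>\<alpha>. f \<alpha> x) summable_on UNIV"
  shows "DERIV (\<lambda>x. infsum (\<lambda>\<alpha>. f \<alpha> x) UNIV) 0 :> infsum (\<lambda>\<alpha>. f' \<alpha> 0) UNIV"
proof -
  define e where "e = from_nat_into (UNIV::'a set)"
  have bij: "bij_betw e UNIV (UNIV::'a set)" unfolding e_def
    by (rule bij_betw_from_nat_into) (use inf in simp_all)
  define S where "S = cball (0::real) (\<delta>/2)"
  have inS: "\<bar>x\<bar> < \<delta>" if "x \<in> S" for x using d that by (simp add: S_def)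
  have Bs: "summable (\<lambda>n. B (e n))" using summable_sums_reindex[OF B bij] by (rule sums_summable)
  have sm0: "summable (\<lambda>n. f (e n) 0)" using summable_sums_reindex[OF sm[of 0] bij] d sums_summable by simp
  have conv: "convex S" by (simp add: S_def)
  have der': "\<And>n x. x \<in> S \<Longrightarrow> (f (e n) has_field_derivative f' (e n) x) (at x within S)"
    by (rule has_field_derivative_at_within[OF der[OF inS]])
  have uc: "uniformly_convergent_on S (\<lambda>n x. \<Sum>i<n. f' (e i) x)"
  proof (rule Weierstrass_m_test'[OF _ Bs])
    fix n x assume "x \<in> S"
    then show "norm (f' (e n) x) \<le> B (e n)" using bd[OF inS] by simp
  qed
  have z: "0 \<in> S" using d by (simp add: S_def)
  have int: "0 \<in> interior S" using d by (simp add: S_def)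
  have D: "((\<lambda>x. \<Sum>n. f (e n) x) has_field_derivative (\<Sum>n. f' (e n) 0)) (at 0)"
    by (rule has_field_derivative_series'(2)[OF conv der' uc z sm0 int])
  have f's: "(\<lambda>\<alpha>. f' \<alpha> 0) summable_on UNIV"
  proof -
    have "(\<lambda>\<alpha>. norm (f' \<alpha> 0)) summable_on UNIV"
    proof (rule summable_on_comparison_test[OF B])
      fix \<alpha> show "norm (f' \<alpha> 0) \<le> B \<alpha>" using bd[of 0 \<alpha>] d by simp
      show "0 \<le> norm (f' \<alpha> 0)" by simp
    qed
    then show ?thesis by (rule abs_summable_summable)
  qed
  have e1: "(\<Sum>n. f' (e n) 0) = infsum (\<lambda>\<alpha>. f' \<alpha> 0) UNIV"
    using sums_unique[OF summable_sums_reindex[OF f's bij]] by simp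
  have ev: "\<forall>\<^sub>F x in nhds 0. (\<Sum>n. f (e n) x) = infsum (\<lambda>\<alpha>. f \<alpha> x) UNIV"
  proof -
    have "\<forall>\<^sub>F x in nhds (0::real). x \<in> ball 0 \<delta>" using d by (intro eventually_nhds_in_open) auto
    then show ?thesis
    proof eventually_elim
      case (elim x)
      then have "\<bar>x\<bar> < \<delta>" by simp
      then show ?case using sums_unique[OF summable_sums_reindex[OF sm[of x] bij]] by simp
    qed
  qed
  have "((\<lambda>x. infsum (\<lambda>\<alpha>. f \<alpha> x) UNIV) has_field_derivative (\<Sum>n. f' (e n) 0)) (at 0)"
    using DERIV_cong_ev[OF refl ev refl] D by blast
  then show ?thesis using e1 by simp
qed

lemma infsum_continuous:
  fixes f :: "'a \<Rightarrow> 'b::topological_space \<Rightarrow> real"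
  assumes c: "\<And>\<alpha>. continuous_on Y (f \<alpha>)"
    and bd: "\<And>\<alpha> y. y \<in> Y \<Longrightarrow> \<bar>f \<alpha> y\<bar> \<le> B \<alpha>" and B: "B summable_on UNIV"
  shows "continuous_on Y (\<lambda>y. infsum (\<lambda>\<alpha>. f \<alpha> y) UNIV)"
proof (rule uniform_limit_theorem)
  show "uniform_limit Y (\<lambda>X y. \<Sum>x\<in>X. f x y) (\<lambda>y. \<Sum>\<^sub>\<infinity>x\<in>UNIV. f x y) (finite_subsets_at_top UNIV)"
    by (rule Weierstrass_m_test_general[OF _ B]) (use bd in auto)
  show "\<forall>\<^sub>F X in finite_subsets_at_top UNIV. continuous_on Y (\<lambda>y. \<Sum>x\<in>X. f x y)"
    by (intro always_eventually allI continuous_on_sum) (use c in auto)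
  show "\<not> trivial_limit (finite_subsets_at_top (UNIV::'a set))"
    by (simp add: finite_subsets_at_top_neq_bot)
qed

lemma geo_sum_half: "(\<Sum>a\<le>N. (1/2::real)^a) \<le> 2"
proof -
  have "(\<Sum>a\<le>N. (1/2::real)^a) = 2 - (1/2)^N" by (induction N) (auto simp: field_simps)
  then show ?thesis by simp
qed

lemma geo_multi:
  shows "(\<lambda>\<alpha>::'n::finite \<Rightarrow> nat. \<Prod>i\<in>UNIV. (1/2::real)^(\<alpha> i)) summable_on UNIV"
    and "infsum (\<lambda>\<alpha>::'n::finite \<Rightarrow> nat. \<Prod>i\<in>UNIV. (1/2::real)^(\<alpha> i)) UNIV \<le> 2^CARD('n)"
proof -
  let ?G = "\<lambda>\<alpha>::'n \<Rightarrow> nat. \<Prod>i\<in>UNIV. (1/2::real)^(\<alpha> i)"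
  have fin: "sum ?G P \<le> 2^CARD('n)" if P: "finite P" for P
  proof -
    define N where "N = Max ((\<lambda>(\<alpha>, i). \<alpha> i) ` (P \<times> UNIV))"
    have le: "\<alpha> i \<le> N" if "\<alpha> \<in> P" for \<alpha> i
      unfolding N_def using P that by (intro Max_ge) auto
    have sub: "P \<subseteq> PiE UNIV (\<lambda>_. {..N})" using le by (auto simp: PiE_def Pi_def)
    have "sum ?G P \<le> sum ?G (PiE UNIV (\<lambda>_. {..N}))"
      by (rule sum_mono2[OF _ sub]) (auto simp: finite_PiE intro!: prod_nonneg)
    also have "\<dots> = (\<Prod>i\<in>(UNIV::'n set). \<Sum>a\<le>N. (1/2::real)^a)"
      by (subst prod_sum_PiE) auto
    also have "\<dots> \<le> (\<Prod>i\<in>(UNIV::'n set). 2)"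
      by (rule prod_mono) (use geo_sum_half in \<open>auto intro: sum_nonneg\<close>)
    also have "\<dots> = 2^CARD('n)" by simp
    finally show ?thesis .
  qed
  show sm: "?G summable_on UNIV"
    by (rule nonneg_bdd_above_summable_on) (use fin in \<open>auto intro!: prod_nonneg simp: bdd_above_def\<close>)
  show "infsum ?G UNIV \<le> 2^CARD('n)"
    by (rule infsum_le_finite_sums[OF sm]) (use fin in auto)
qed




definition ff :: "nat \<Rightarrow> nat \<Rightarrow> real" where
  "ff a b = (if b \<le> a then fact a / fact (a - b) else 0)"

lemma ff_0[simp]: "ff a 0 = 1" by (simp add: ff_def)

lemma ff_nonneg: "ff a b \<ge> 0" by (simp add: ff_def)

lemma ff_Suc: "ff a b * real (a - b) = ff a (Suc b)"
proof (cases "Suc b \<le> a")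
  case True
  then have "fact (a - b) = real (a - b) * fact (a - Suc b)"
    by (metis Suc_diff_Suc Suc_le_lessD fact_Suc of_nat_fact of_nat_mult)
  then have e: "fact (a - b) = real (a - b) * fact (a - Suc b)" .
  have ne: "real (a - b) \<noteq> 0" using True by simp
  have "ff a b * real (a - b) = fact a / (real (a - b) * fact (a - Suc b)) * real (a - b)"
    using True by (simp only: ff_def e if_True Suc_leD)
  also have "\<dots> = fact a / fact (a - Suc b)" using ne by (simp add: field_simps)
  also have "\<dots> = ff a (Suc b)" using True by (simp add: ff_def)
  finally show ?thesis .
next
  case False
  then show ?thesis by (cases "b \<le> a") (auto simp: ff_def)
qed

lemma coord_bound:
  fixes s :: real
  assumes s: "s > 0"
  shows "ff a b * (s/4)^(a - b) / s^a \<le> fact b * (4/s)^b * (1/2)^a"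
proof (cases "b \<le> a")
  case False then show ?thesis using s by (simp add: ff_def)
next
  case True
  have f: "ff a b = real (a choose b) * fact b"
    using binomial_fact_lemma[OF True] True
    by (simp add: ff_def field_simps) (metis of_nat_fact of_nat_mult mult.commute)
  have c: "real (a choose b) \<le> 2^a"
    using binomial_le_pow2[of a b] by (metis of_nat_le_iff of_nat_numeral of_nat_power)
  have sa: "s^a = s^b * s^(a - b)" using True by (simp add: power_add[symmetric])
  have "(s/4)^(a - b) / s^a = (1/4)^(a - b) / s^b"
    using s by (simp add: sa power_divide field_simps)
  also have "(1/4::real)^(a - b) = 4^b * (1/4)^a"
  proof -
    have "(1/4::real)^a = (1/4)^b * (1/4)^(a-b)" using True by (simp add: power_add[symmetric])
    then show ?thesis by (simp add: power_divide field_simps)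
  qed
  finally have e: "(s/4)^(a - b) / s^a = 4^b * (1/4)^a / s^b" by simp
  have "ff a b * (s/4)^(a - b) / s^a = real (a choose b) * fact b * (4^b * (1/4)^a / s^b)"
    by (simp add: f e[symmetric] mult.assoc)
  also have "\<dots> \<le> 2^a * fact b * (4^b * (1/4)^a / s^b)"
    using c s by (intro mult_right_mono) auto
  also have "\<dots> = fact b * (4/s)^b * ((2::real)^a * (1/4)^a)"
    by (simp add: power_divide field_simps)
  also have "(2::real)^a * (1/4)^a = (1/2)^a" by (simp add: power_mult_distrib[symmetric])
  finally show ?thesis .
qed

lemma fact_mult_le': "fact m * fact n \<le> (fact (m + n) :: real)"
proof -
  have "fact m * fact n * real ((m + n) choose m) = fact (m + n)"
    using binomial_fact_lemma[of m "m + n"] by (metis add_diff_cancel_left' le_add1 of_nat_fact of_nat_mult)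
  moreover have "real ((m + n) choose m) \<ge> 1" by (simp add: Suc_leI)
  moreover have "0 \<le> fact m * (fact n :: real)" by simp
  ultimately show ?thesis using mult_left_mono[of 1 "real ((m + n) choose m)" "fact m * fact n :: real"] by simp
qed

lemma prod_fact_le: "finite A \<Longrightarrow> (\<Prod>i\<in>A. fact (\<beta> i)) \<le> (fact (\<Sum>i\<in>A. \<beta> i) :: real)"
proof (induction A rule: finite_induct)
  case empty then show ?case by simp
next
  case (insert x A)
  have "(\<Prod>i\<in>insert x A. fact (\<beta> i)) = fact (\<beta> x) * (\<Prod>i\<in>A. fact (\<beta> i) :: real)" using insert by simp
  also have "\<dots> \<le> fact (\<beta> x) * fact (\<Sum>i\<in>A. \<beta> i)"
    using insert by (intro mult_left_mono) auto
  also have "\<dots> \<le> fact (\<beta> x + (\<Sum>i\<in>A. \<beta> i))" by (rule fact_mult_le')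
  finally show ?case using insert by simp
qed

lemma infinite_multi: "infinite (UNIV :: ('n \<Rightarrow> nat) set)"
proof
  assume fin: "finite (UNIV :: ('n \<Rightarrow> nat) set)"
  have "inj (\<lambda>k::nat. (\<lambda>_::'n. k))" by (auto simp: inj_def fun_eq_iff)
  then have "finite (UNIV :: nat set)"
    using finite_imageD[OF finite_subset[OF subset_UNIV fin]] by blast
  then show False by simp
qed

definition monoT :: "real^'n::finite \<Rightarrow> ('n \<Rightarrow> nat) \<Rightarrow> ('n \<Rightarrow> nat) \<Rightarrow> real^'n \<Rightarrow> real" where
  "monoT x0 \<beta> \<alpha> y = (\<Prod>i\<in>UNIV. ff (\<alpha> i) (\<beta> i) * (y$i - x0$i)^(\<alpha> i - \<beta> i))"

definition Sd :: "(('n::finite \<Rightarrow> nat) \<Rightarrow> real) \<Rightarrow> real^'n \<Rightarrow> ('n \<Rightarrow> nat) \<Rightarrow> real^'n \<Rightarrow> real" where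
  "Sd c x0 \<beta> y = infsum (\<lambda>\<alpha>. c \<alpha> * monoT x0 \<beta> \<alpha> y) UNIV"

definition box0 :: "real^'n::finite \<Rightarrow> real \<Rightarrow> (real^'n) set" where
  "box0 x0 t = {y. \<forall>i. \<bar>y$i - x0$i\<bar> < t}"

lemma open_box0:
  fixes x0 :: "real^'n::finite"
  shows "open (box0 x0 t)"
proof -
  have "box0 x0 t = (\<Inter>i\<in>UNIV. {y. \<bar>y$i - x0$i\<bar> < t})" by (auto simp: box0_def)
  moreover have "open {y::real^'n. \<bar>y$i - x0$i\<bar> < t}" for i
    by (intro open_Collect_less continuous_intros)
  ultimately show ?thesis by (auto intro: open_INT)
qed

lemma term_bound:
  fixes c :: "('n::finite \<Rightarrow> nat) \<Rightarrow> real" and s Kc :: real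
  assumes s: "s > 0" and Kc: "\<bar>c \<alpha>\<bar> * (\<Prod>i\<in>UNIV. s^(\<alpha> i)) \<le> Kc"
    and y: "\<And>i. \<bar>y$i - x0$i\<bar> \<le> s/4"
  shows "\<bar>c \<alpha> * monoT x0 \<beta> \<alpha> y\<bar> \<le>
     Kc * (\<Prod>i\<in>UNIV. fact (\<beta> i) * (4/s)^(\<beta> i)) * (\<Prod>i\<in>UNIV. (1/2::real)^(\<alpha> i))"
proof -
  have sp: "(\<Prod>i\<in>UNIV. s^(\<alpha> i)) > 0" using s by (intro prod_pos) auto
  have "\<bar>monoT x0 \<beta> \<alpha> y\<bar> \<le> (\<Prod>i\<in>UNIV. ff (\<alpha> i) (\<beta> i) * (s/4)^(\<alpha> i - \<beta> i))"
    unfolding monoT_def abs_prod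
    by (intro prod_mono conjI) (use y ff_nonneg in \<open>auto simp: abs_mult power_abs intro!: mult_left_mono power_mono\<close>)
  also have "\<dots> = (\<Prod>i\<in>UNIV. s^(\<alpha> i)) * (\<Prod>i\<in>UNIV. ff (\<alpha> i) (\<beta> i) * (s/4)^(\<alpha> i - \<beta> i) / s^(\<alpha> i))"
  proof -
    have "(\<Prod>i\<in>UNIV. ff (\<alpha> i) (\<beta> i) * (s/4)^(\<alpha> i - \<beta> i)) =
        (\<Prod>i\<in>UNIV. s^(\<alpha> i) * (ff (\<alpha> i) (\<beta> i) * (s/4)^(\<alpha> i - \<beta> i) / s^(\<alpha> i)))"
      by (rule prod.cong) (use s in auto)
    then show ?thesis by (simp only: prod.distrib)
  qed
  also have "\<dots> \<le> (\<Prod>i\<in>UNIV. s^(\<alpha> i)) * (\<Prod>i\<in>UNIV. fact (\<beta> i) * (4/s)^(\<beta> i) * (1/2)^(\<alpha> i))"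
    using sp s by (intro mult_left_mono prod_mono conjI coord_bound) (auto intro!: divide_nonneg_pos mult_nonneg_nonneg ff_nonneg)
  finally have m: "\<bar>monoT x0 \<beta> \<alpha> y\<bar> \<le> (\<Prod>i\<in>UNIV. s^(\<alpha> i)) * (\<Prod>i\<in>UNIV. fact (\<beta> i) * (4/s)^(\<beta> i) * (1/2)^(\<alpha> i))" .
  have "\<bar>c \<alpha> * monoT x0 \<beta> \<alpha> y\<bar> = \<bar>c \<alpha>\<bar> * \<bar>monoT x0 \<beta> \<alpha> y\<bar>" by (simp add: abs_mult)
  also have "\<dots> \<le> \<bar>c \<alpha>\<bar> * ((\<Prod>i\<in>UNIV. s^(\<alpha> i)) * (\<Prod>i\<in>UNIV. fact (\<beta> i) * (4/s)^(\<beta> i) * (1/2)^(\<alpha> i)))"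
    by (intro mult_left_mono m) auto
  also have "\<dots> = (\<bar>c \<alpha>\<bar> * (\<Prod>i\<in>UNIV. s^(\<alpha> i))) * (\<Prod>i\<in>UNIV. fact (\<beta> i) * (4/s)^(\<beta> i) * (1/2)^(\<alpha> i))"
    by (simp add: mult.assoc)
  also have "\<dots> \<le> Kc * (\<Prod>i\<in>UNIV. fact (\<beta> i) * (4/s)^(\<beta> i) * (1/2)^(\<alpha> i))"
    using s by (intro mult_right_mono Kc prod_nonneg) auto
  also have "\<dots> = Kc * (\<Prod>i\<in>UNIV. fact (\<beta> i) * (4/s)^(\<beta> i)) * (\<Prod>i\<in>UNIV. (1/2::real)^(\<alpha> i))"
    by (simp add: prod.distrib mult.assoc)
  finally show ?thesis .
qed



definition Pb :: "('n::finite \<Rightarrow> nat) \<Rightarrow> real \<Rightarrow> real" where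
  "Pb \<beta> s = (\<Prod>i\<in>UNIV. fact (\<beta> i) * (4/s)^(\<beta> i))"

definition G :: "('n::finite \<Rightarrow> nat) \<Rightarrow> real" where
  "G \<alpha> = (\<Prod>i\<in>UNIV. (1/2::real)^(\<alpha> i))"

lemma Pb_nonneg: "s > 0 \<Longrightarrow> Pb \<beta> s \<ge> 0"
  unfolding Pb_def by (intro prod_nonneg) auto

lemma G_nonneg: "G \<alpha> \<ge> 0" unfolding G_def by (intro prod_nonneg) auto

lemma Pb_le: "s > 0 \<Longrightarrow> Pb \<beta> s \<le> fact (mlen \<beta>) * (4/s)^(mlen \<beta>)"
proof -
  assume s: "s > 0"
  have "Pb \<beta> s = (\<Prod>i\<in>UNIV. fact (\<beta> i)) * (\<Prod>i\<in>UNIV. (4/s)^(\<beta> i))"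
    unfolding Pb_def by (rule prod.distrib)
  also have "(\<Prod>i\<in>UNIV. (4/s)^(\<beta> i)) = (4/s)^(mlen \<beta>)"
    unfolding mlen_def by (rule power_sum[symmetric])
  also have "(\<Prod>i\<in>UNIV. fact (\<beta> i)) \<le> (fact (mlen \<beta>) :: real)"
    unfolding mlen_def by (rule prod_fact_le) simp
  then have "(\<Prod>i\<in>UNIV. fact (\<beta> i)) * (4/s)^(mlen \<beta>) \<le> fact (mlen \<beta>) * (4/s)^(mlen \<beta>)"
    using s by (intro mult_right_mono) auto
  finally show ?thesis .
qed

lemma series_props:
  fixes c :: "('n::finite \<Rightarrow> nat) \<Rightarrow> real" and s Kc :: real and x0 y :: "real^'n"
  assumes s: "s > 0" and Kc: "\<And>\<alpha>. \<bar>c \<alpha>\<bar> * (\<Prod>i\<in>UNIV. s^(\<alpha> i)) \<le> Kc"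
    and y: "\<And>i. \<bar>y$i - x0$i\<bar> \<le> s/4"
  shows "(\<lambda>\<alpha>. c \<alpha> * monoT x0 \<beta> \<alpha> y) summable_on UNIV"
    and "\<bar>Sd c x0 \<beta> y\<bar> \<le> Kc * Pb \<beta> s * 2^CARD('n)"
    and "\<And>\<alpha>. \<bar>c \<alpha> * monoT x0 \<beta> \<alpha> y\<bar> \<le> Kc * Pb \<beta> s * G \<alpha>"
proof -
  have tb: "\<bar>c \<alpha> * monoT x0 \<beta> \<alpha> y\<bar> \<le> Kc * Pb \<beta> s * G \<alpha>" for \<alpha>
    unfolding Pb_def G_def by (rule term_bound[OF s Kc y])
  then show "\<And>\<alpha>. \<bar>c \<alpha> * monoT x0 \<beta> \<alpha> y\<bar> \<le> Kc * Pb \<beta> s * G \<alpha>" .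
  have Gs: "(G :: ('n \<Rightarrow> nat) \<Rightarrow> real) summable_on UNIV" unfolding G_def by (rule geo_multi(1))
  have Gi: "infsum (G :: ('n \<Rightarrow> nat) \<Rightarrow> real) UNIV \<le> 2^CARD('n)" unfolding G_def by (rule geo_multi(2))
  have Kc0: "Kc \<ge> 0" using Kc[of undefined] s by (smt (verit) abs_ge_zero mult_nonneg_nonneg prod_nonneg zero_le_power)
  have Bs: "(\<lambda>\<alpha>::'n \<Rightarrow> nat. Kc * Pb \<beta> s * G \<alpha>) summable_on UNIV" by (rule summable_on_cmult_right[OF Gs])
  have ns: "(\<lambda>\<alpha>. norm (c \<alpha> * monoT x0 \<beta> \<alpha> y)) summable_on UNIV"
    by (rule summable_on_comparison_test[OF Bs]) (use tb in auto)
  then show sm: "(\<lambda>\<alpha>. c \<alpha> * monoT x0 \<beta> \<alpha> y) summable_on UNIV" by (rule abs_summable_summable)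
  have "\<bar>Sd c x0 \<beta> y\<bar> \<le> infsum (\<lambda>\<alpha>. norm (c \<alpha> * monoT x0 \<beta> \<alpha> y)) UNIV"
    unfolding Sd_def using norm_infsum_bound[OF ns] by simp
  also have "\<dots> \<le> infsum (\<lambda>\<alpha>::'n \<Rightarrow> nat. Kc * Pb \<beta> s * G \<alpha>) UNIV"
    by (rule infsum_mono[OF ns Bs]) (use tb in auto)
  also have "\<dots> = Kc * Pb \<beta> s * infsum (G :: ('n \<Rightarrow> nat) \<Rightarrow> real) UNIV" by (rule infsum_cmult_right'[where f=G])
  also have "\<dots> \<le> Kc * Pb \<beta> s * 2^CARD('n)"
    using Gi Kc0 Pb_nonneg[OF s, of \<beta>] by (intro mult_left_mono mult_nonneg_nonneg) auto
  finally show "\<bar>Sd c x0 \<beta> y\<bar> \<le> Kc * Pb \<beta> s * 2^CARD('n)" .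
qed

lemma line_comp: "(y + \<tau> *\<^sub>R (ax d :: real^'n::finite)) $ i = (if i = d then y $ i + \<tau> else y $ i)"
  by (simp add: axis_def)

lemma mono_DERIV:
  fixes x0 y :: "real^'n::finite"
  shows "DERIV (\<lambda>\<tau>. monoT x0 \<beta> \<alpha> (y + \<tau> *\<^sub>R ax d)) \<tau>0 :> monoT x0 (\<beta>(d := Suc (\<beta> d))) \<alpha> (y + \<tau>0 *\<^sub>R ax d)"
proof -
  define R where "R = (\<Prod>i\<in>UNIV - {d}. ff (\<alpha> i) (\<beta> i) * (y$i - x0$i)^(\<alpha> i - \<beta> i))"
  define a where "a = \<alpha> d"
  define b where "b = \<beta> d"
  define w where "w = y$d - x0$d"
  have split: "monoT x0 \<gamma> \<alpha> (y + \<tau> *\<^sub>R ax d) =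
      ff a (\<gamma> d) * (\<tau> + w)^(a - \<gamma> d) * (\<Prod>i\<in>UNIV - {d}. ff (\<alpha> i) (\<gamma> i) * (y$i - x0$i)^(\<alpha> i - \<gamma> i))"
    for \<gamma> \<tau>
  proof -
    have "monoT x0 \<gamma> \<alpha> (y + \<tau> *\<^sub>R ax d) =
      (ff (\<alpha> d) (\<gamma> d) * ((y + \<tau> *\<^sub>R ax d)$d - x0$d)^(\<alpha> d - \<gamma> d)) *
      (\<Prod>i\<in>UNIV - {d}. ff (\<alpha> i) (\<gamma> i) * ((y + \<tau> *\<^sub>R ax d)$i - x0$i)^(\<alpha> i - \<gamma> i))"
      unfolding monoT_def by (rule prod.remove) auto
    also have "(\<Prod>i\<in>UNIV - {d}. ff (\<alpha> i) (\<gamma> i) * ((y + \<tau> *\<^sub>R ax d)$i - x0$i)^(\<alpha> i - \<gamma> i))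
       = (\<Prod>i\<in>UNIV - {d}. ff (\<alpha> i) (\<gamma> i) * (y$i - x0$i)^(\<alpha> i - \<gamma> i))"
      by (rule prod.cong) (auto simp: axis_def)
    finally show ?thesis by (simp add: line_comp a_def w_def algebra_simps)
  qed
  have R2: "(\<Prod>i\<in>UNIV - {d}. ff (\<alpha> i) ((\<beta>(d := Suc (\<beta> d))) i) * (y$i - x0$i)^(\<alpha> i - (\<beta>(d := Suc (\<beta> d))) i)) = R"
    unfolding R_def by (rule prod.cong) auto
  have D0: "DERIV (\<lambda>\<tau>. ff a b * (\<tau> + w)^(a - b) * R) \<tau>0 :> ff a b * (real (a - b) * (\<tau>0 + w)^(a - b - 1)) * R"
    by (auto intro!: derivative_eq_intros)
  have eq: "ff a b * (real (a - b) * (\<tau>0 + w)^(a - b - 1)) * R = ff a (Suc b) * (\<tau>0 + w)^(a - Suc b) * R"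
    using ff_Suc[of a b] by (simp add: algebra_simps)
  have D: "DERIV (\<lambda>\<tau>. ff a b * (\<tau> + w)^(a - b) * R) \<tau>0 :> ff a (Suc b) * (\<tau>0 + w)^(a - Suc b) * R"
    using D0 unfolding eq .
  have f1: "(\<lambda>\<tau>. monoT x0 \<beta> \<alpha> (y + \<tau> *\<^sub>R ax d)) = (\<lambda>\<tau>. ff a b * (\<tau> + w)^(a - b) * R)"
    using split[of \<beta>] by (simp add: R_def b_def)
  have f2: "monoT x0 (\<beta>(d := Suc (\<beta> d))) \<alpha> (y + \<tau>0 *\<^sub>R ax d) = ff a (Suc b) * (\<tau>0 + w)^(a - Suc b) * R"
    using split[of "\<beta>(d := Suc (\<beta> d))"] R2 by (simp add: b_def)
  show ?thesis unfolding f1 f2 by (rule D)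
qed



lemma Sd_DERIV:
  fixes c :: "('n::finite \<Rightarrow> nat) \<Rightarrow> real" and s Kc :: real and x0 y :: "real^'n"
  assumes s: "s > 0" and Kc: "\<And>\<alpha>. \<bar>c \<alpha>\<bar> * (\<Prod>i\<in>UNIV. s^(\<alpha> i)) \<le> Kc"
    and y: "y \<in> box0 x0 (s/4)"
  shows "DERIV (\<lambda>\<tau>. Sd c x0 \<beta> (y + \<tau> *\<^sub>R ax d)) 0 :> Sd c x0 (\<beta>(d := Suc (\<beta> d))) y"
proof -
  let ?\<beta>' = "\<beta>(d := Suc (\<beta> d))"
  define \<delta> where "\<delta> = s/4 - \<bar>y$d - x0$d\<bar>"
  have d: "\<delta> > 0" using y by (simp add: box0_def \<delta>_def)
  have near: "\<bar>(y + \<tau> *\<^sub>R ax d)$i - x0$i\<bar> \<le> s/4" if "\<bar>\<tau>\<bar> < \<delta>" for \<tau> i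
  proof (cases "i = d")
    case True
    have "\<bar>y$d + \<tau> - x0$d\<bar> \<le> \<bar>y$d - x0$d\<bar> + \<bar>\<tau>\<bar>" by linarith
    then show ?thesis using True that by (simp add: line_comp \<delta>_def)
  next
    case False
    have "\<bar>y$i - x0$i\<bar> < s/4" using y by (simp add: box0_def)
    then show ?thesis using False by (simp add: axis_def)
  qed
  have Gs: "(G :: ('n \<Rightarrow> nat) \<Rightarrow> real) summable_on UNIV" unfolding G_def by (rule geo_multi(1))
  have "DERIV (\<lambda>\<tau>. infsum (\<lambda>\<alpha>. c \<alpha> * monoT x0 \<beta> \<alpha> (y + \<tau> *\<^sub>R ax d)) UNIV) 0 :>
      infsum (\<lambda>\<alpha>. c \<alpha> * monoT x0 ?\<beta>' \<alpha> (y + 0 *\<^sub>R ax d)) UNIV"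
  proof (rule infsum_DERIV[OF infinite_multi d])
    show "DERIV (\<lambda>\<tau>. c \<alpha> * monoT x0 \<beta> \<alpha> (y + \<tau> *\<^sub>R ax d)) x :> c \<alpha> * monoT x0 ?\<beta>' \<alpha> (y + x *\<^sub>R ax d)"
      for \<alpha> x by (intro DERIV_cmult mono_DERIV)
    show "\<bar>c \<alpha> * monoT x0 ?\<beta>' \<alpha> (y + x *\<^sub>R ax d)\<bar> \<le> Kc * Pb ?\<beta>' s * G \<alpha>" if "\<bar>x\<bar> < \<delta>" for \<alpha> x
      by (rule series_props(3)[OF s Kc near[OF that]])
    show "(\<lambda>\<alpha>::'n \<Rightarrow> nat. Kc * Pb ?\<beta>' s * G \<alpha>) summable_on UNIV" by (rule summable_on_cmult_right[OF Gs])
    show "(\<lambda>\<alpha>. c \<alpha> * monoT x0 \<beta> \<alpha> (y + x *\<^sub>R ax d)) summable_on UNIV" if "\<bar>x\<bar> < \<delta>" for x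
      by (rule series_props(1)[OF s Kc near[OF that]])
  qed
  then show ?thesis by (simp add: Sd_def)
qed

lemma Sd_cont:
  fixes c :: "('n::finite \<Rightarrow> nat) \<Rightarrow> real" and s Kc :: real and x0 :: "real^'n"
  assumes s: "s > 0" and Kc: "\<And>\<alpha>. \<bar>c \<alpha>\<bar> * (\<Prod>i\<in>UNIV. s^(\<alpha> i)) \<le> Kc"
  shows "continuous_on (box0 x0 (s/4)) (Sd c x0 \<beta>)"
proof -
  have Gs: "(G :: ('n \<Rightarrow> nat) \<Rightarrow> real) summable_on UNIV" unfolding G_def by (rule geo_multi(1))
  have "continuous_on (box0 x0 (s/4)) (\<lambda>y. infsum (\<lambda>\<alpha>. c \<alpha> * monoT x0 \<beta> \<alpha> y) UNIV)"
  proof (rule infsum_continuous)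
    show "continuous_on (box0 x0 (s/4)) (\<lambda>y. c \<alpha> * monoT x0 \<beta> \<alpha> y)" for \<alpha>
      unfolding monoT_def by (intro continuous_intros)
    show "\<bar>c \<alpha> * monoT x0 \<beta> \<alpha> y\<bar> \<le> Kc * Pb \<beta> s * G \<alpha>" if "y \<in> box0 x0 (s/4)" for \<alpha> y
      by (rule series_props(3)[OF s Kc]) (use that in \<open>auto simp: box0_def less_imp_le\<close>)
    show "(\<lambda>\<alpha>::'n \<Rightarrow> nat. Kc * Pb \<beta> s * G \<alpha>) summable_on UNIV" by (rule summable_on_cmult_right[OF Gs])
  qed
  then show ?thesis by (simp add: Sd_def[abs_def])
qed

lemma count_list_Cons_fun: "(count_list fs)(d := Suc (count_list fs d)) = count_list (d # fs)"
  by (auto simp: fun_eq_iff)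

lemma analytic_local:
  fixes g :: "real^'n::finite \<Rightarrow> real" and c :: "('n \<Rightarrow> nat) \<Rightarrow> real" and x0 :: "real^'n"
  assumes r: "r > 0"
    and hs: "\<And>x. x \<in> ball x0 r \<Longrightarrow> ((\<lambda>\<alpha>. c \<alpha> * (\<Prod>i\<in>UNIV. (x$i - x0$i)^(\<alpha> i))) has_sum g x) UNIV"
  shows "\<exists>t>0. \<exists>K\<ge>0. \<exists>\<rho>>0. \<forall>fs. continuous_on (box0 x0 t) (dlist fs g) \<and>
     (\<forall>y\<in>box0 x0 t. \<forall>i. (\<lambda>\<tau>. dlist fs g (y + \<tau> *\<^sub>R ax i)) differentiable (at 0)) \<and>
     (\<forall>y\<in>box0 x0 t. \<bar>dlist fs g y\<bar> \<le> K * \<rho>^(length fs) * fact (length fs))"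
proof -
  define n where "n = CARD('n)"
  have n: "n \<ge> 1" unfolding n_def by (simp add: Suc_leI)
  define s where "s = r / (2 * n)"
  have s: "s > 0" using r n by (simp add: s_def)
  define z where "z = x0 + (\<chi> i. s)"
  have "norm (z - x0) \<le> (\<Sum>i\<in>UNIV. \<bar>(z - x0)$i\<bar>)" by (rule norm_le_l1_cart)
  also have "\<dots> = n * s" using s by (simp add: z_def n_def)
  also have "\<dots> < r" using r n by (simp add: s_def)
  finally have zb: "z \<in> ball x0 r" by (simp add: dist_norm norm_minus_commute)
  have ze: "(\<lambda>\<alpha>. c \<alpha> * (\<Prod>i\<in>UNIV. (z$i - x0$i)^(\<alpha> i))) = (\<lambda>\<alpha>. c \<alpha> * (\<Prod>i\<in>UNIV. s^(\<alpha> i)))"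
    by (simp add: z_def)
  have "((\<lambda>\<alpha>. c \<alpha> * (\<Prod>i\<in>UNIV. s^(\<alpha> i))) has_sum g z) UNIV"
    using hs[OF zb] unfolding ze .
  then have "(\<lambda>\<alpha>. c \<alpha> * (\<Prod>i\<in>UNIV. s^(\<alpha> i))) summable_on UNIV" by (rule has_sum_imp_summable)
  then have ns: "(\<lambda>\<alpha>. norm (c \<alpha> * (\<Prod>i\<in>UNIV. s^(\<alpha> i)))) summable_on UNIV"
    by (rule summable_on_iff_abs_summable_on_real[THEN iffD1])
  define Kc where "Kc = infsum (\<lambda>\<alpha>. norm (c \<alpha> * (\<Prod>i\<in>UNIV. s^(\<alpha> i)))) UNIV"
  have Kc: "\<bar>c \<alpha>\<bar> * (\<Prod>i\<in>UNIV. s^(\<alpha> i)) \<le> Kc" for \<alpha>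
  proof -
    have "sum (\<lambda>\<alpha>. norm (c \<alpha> * (\<Prod>i\<in>UNIV. s^(\<alpha> i)))) {\<alpha>} \<le> Kc"
      unfolding Kc_def by (rule finite_sum_le_infsum[OF ns]) auto
    moreover have "(\<Prod>i\<in>UNIV. s^(\<alpha> i)) \<ge> 0" using s by (intro prod_nonneg) auto
    ultimately show ?thesis by (simp add: abs_mult)
  qed
  have Kc0: "Kc \<ge> 0" unfolding Kc_def by (intro infsum_nonneg) auto
  define t where "t = s/4"
  have t: "t > 0" using s by (simp add: t_def)
  have inball: "y \<in> ball x0 r" if "y \<in> box0 x0 t" for y
  proof -
    have "norm (y - x0) \<le> (\<Sum>i\<in>UNIV. \<bar>(y - x0)$i\<bar>)" by (rule norm_le_l1_cart)
    also have "\<dots> \<le> (\<Sum>i\<in>(UNIV::'n set). t)"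
      by (rule sum_mono) (use that in \<open>auto simp: box0_def less_imp_le\<close>)
    also have "\<dots> = n * t" by (simp add: n_def)
    also have "\<dots> < r" using r n s by (simp add: t_def s_def field_simps)
    finally show ?thesis by (simp add: dist_norm norm_minus_commute)
  qed
  have opb: "open (box0 x0 t)" by (rule open_box0)
  have rep: "\<forall>y\<in>box0 x0 t. dlist fs g y = Sd c x0 (count_list fs) y" for fs
  proof (induction fs)
    case Nil
    show ?case
    proof
      fix y assume y: "y \<in> box0 x0 t"
      have "((\<lambda>\<alpha>. c \<alpha> * monoT x0 (count_list []) \<alpha> y) has_sum g y) UNIV"
        using hs[OF inball[OF y]] by (simp add: monoT_def)
      then show "dlist [] g y = Sd c x0 (count_list []) y" by (simp add: Sd_def infsumI)
    qed
  next
    case (Cons d fs)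
    show ?case
    proof
      fix y assume y: "y \<in> box0 x0 t"
      have "dlist (d # fs) g y = pd d (dlist fs g) y" by simp
      also have "\<dots> = pd d (Sd c x0 (count_list fs)) y"
        by (rule pd_local[OF opb y]) (use Cons.IH in auto)
      also have "\<dots> = Sd c x0 ((count_list fs)(d := Suc (count_list fs d))) y"
        by (rule pd_DERIV, rule Sd_DERIV[OF s Kc]) (use y in \<open>simp add: t_def\<close>)
      also have "\<dots> = Sd c x0 (count_list (d # fs)) y" by (simp only: count_list_Cons_fun)
      finally show "dlist (d # fs) g y = Sd c x0 (count_list (d # fs)) y" .
    qed
  qed
  have A: "\<forall>fs. continuous_on (box0 x0 t) (dlist fs g) \<and>
     (\<forall>y\<in>box0 x0 t. \<forall>i. (\<lambda>\<tau>. dlist fs g (y + \<tau> *\<^sub>R ax i)) differentiable (at 0)) \<and>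
     (\<forall>y\<in>box0 x0 t. \<bar>dlist fs g y\<bar> \<le> (Kc * 2^n) * (4/s)^(length fs) * fact (length fs))"
  proof (intro allI conjI ballI)
    fix fs :: "'n list"
    have "continuous_on (box0 x0 t) (Sd c x0 (count_list fs))"
      unfolding t_def by (rule Sd_cont[OF s Kc])
    then show "continuous_on (box0 x0 t) (dlist fs g)"
      by (rule continuous_on_eq) (use rep in auto)
  next
    fix fs :: "'n list" and y i assume y: "y \<in> box0 x0 t"
    have D: "DERIV (\<lambda>\<tau>. Sd c x0 (count_list fs) (y + \<tau> *\<^sub>R ax i)) 0 :> Sd c x0 ((count_list fs)(i := Suc (count_list fs i))) y"
      by (rule Sd_DERIV[OF s Kc]) (use y in \<open>simp add: t_def\<close>)
    have ev: "\<forall>\<^sub>F \<tau> in nhds 0. dlist fs g (y + \<tau> *\<^sub>R ax i) = Sd c x0 (count_list fs) (y + \<tau> *\<^sub>R ax i)"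
      using ev_line_in_open[OF opb y, of "ax i"] by eventually_elim (use rep in auto)
    have "DERIV (\<lambda>\<tau>. dlist fs g (y + \<tau> *\<^sub>R ax i)) 0 :> Sd c x0 ((count_list fs)(i := Suc (count_list fs i))) y"
      using DERIV_cong_ev[OF refl ev refl] D by blast
    then show "(\<lambda>\<tau>. dlist fs g (y + \<tau> *\<^sub>R ax i)) differentiable (at 0)"
      using real_differentiable_def by blast
  next
    fix fs :: "'n list" and y assume y: "y \<in> box0 x0 t"
    have ml: "mlen (count_list fs) = length fs" unfolding mlen_def by (rule size_mset_count)
    have "\<bar>dlist fs g y\<bar> = \<bar>Sd c x0 (count_list fs) y\<bar>" using rep y by auto
    also have "\<dots> \<le> Kc * Pb (count_list fs) s * 2^CARD('n)"
      by (rule series_props(2)[OF s Kc]) (use y in \<open>auto simp: box0_def t_def less_imp_le\<close>)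
    also have "\<dots> \<le> Kc * (fact (length fs) * (4/s)^(length fs)) * 2^CARD('n)"
      using Pb_le[OF s, of "count_list fs"] Kc0 unfolding ml by (intro mult_right_mono mult_left_mono) auto
    also have "\<dots> = Kc * 2^n * (4/s)^(length fs) * fact (length fs)" by (simp add: n_def algebra_simps)
    finally show "\<bar>dlist fs g y\<bar> \<le> Kc * 2^n * (4/s)^(length fs) * fact (length fs)" .
  qed
  show ?thesis
    apply (rule exI[of _ t], rule conjI[OF t])
    apply (rule exI[of _ "Kc * 2^n"], rule conjI, simp add: Kc0)
    apply (rule exI[of _ "4/s"], rule conjI, simp add: s)
    using A by blast
qed



lemma compact_family_bound:
  fixes h :: "'b \<Rightarrow> 'a::topological_space \<Rightarrow> real" and len :: "'b \<Rightarrow> nat"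
  assumes K: "compact K"
    and loc: "\<forall>x\<in>K. \<exists>N C R. open N \<and> x \<in> N \<and> C \<ge> 0 \<and> R \<ge> 1 \<and>
       (\<forall>b. \<forall>y\<in>N. \<bar>h b y\<bar> \<le> C * R^(len b) * fact (len b))"
  shows "\<exists>C R. C \<ge> 0 \<and> R \<ge> 1 \<and> (\<forall>b. \<forall>y\<in>K. \<bar>h b y\<bar> \<le> C * R^(len b) * fact (len b))"
proof -
  from loc obtain NN CC RR where NCR: "\<And>x. x \<in> K \<Longrightarrow> open (NN x) \<and> x \<in> NN x \<and> CC x \<ge> 0 \<and> RR x \<ge> 1 \<and>
       (\<forall>b. \<forall>y\<in>NN x. \<bar>h b y\<bar> \<le> CC x * RR x^(len b) * fact (len b))"
    by metis
  obtain C' where C': "C' \<subseteq> K" "finite C'" "K \<subseteq> (\<Union>c\<in>C'. NN c)"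
    by (rule compactE_image[OF K, of K NN]) (use NCR in auto)
  define Cm where "Cm = Max (insert 0 (CC ` C'))"
  define Rm where "Rm = Max (insert 1 (RR ` C'))"
  have Cm: "Cm \<ge> 0" "\<And>x. x \<in> C' \<Longrightarrow> CC x \<le> Cm" using C'(2) by (auto simp: Cm_def)
  have Rm: "Rm \<ge> 1" "\<And>x. x \<in> C' \<Longrightarrow> RR x \<le> Rm" using C'(2) by (auto simp: Rm_def)
  have "\<bar>h b y\<bar> \<le> Cm * Rm^(len b) * fact (len b)" if y: "y \<in> K" for b y
  proof -
    obtain x where x: "x \<in> C'" "y \<in> NN x" using C'(3) y by auto
    have xK: "x \<in> K" using x C' by auto
    have "\<bar>h b y\<bar> \<le> CC x * RR x^(len b) * fact (len b)" using NCR[OF xK] x by blast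
    also have "\<dots> \<le> Cm * Rm^(len b) * fact (len b)"
      using NCR[OF xK] Cm Rm x by (intro mult_right_mono mult_mono power_mono) auto
    finally show ?thesis .
  qed
  then show ?thesis using Cm Rm by blast
qed

lemma analytic_global:
  fixes g :: "real^'n::finite \<Rightarrow> real"
  assumes op: "open \<Omega>" and ra: "real_analytic_on \<Omega> g"
  shows "smooth_on \<Omega> g"
    and "\<And>K. compact K \<Longrightarrow> K \<subseteq> \<Omega> \<Longrightarrow> \<exists>C R. C \<ge> 0 \<and> R \<ge> 1 \<and>
           (\<forall>fs. \<forall>y\<in>K. \<bar>dlist fs g y\<bar> \<le> C * R^(length fs) * fact (length fs))"
proof -
  have loc: "\<exists>t>0. \<exists>K\<ge>0. \<exists>\<rho>>0. \<forall>fs. continuous_on (box0 x0 t) (dlist fs g) \<and>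
     (\<forall>y\<in>box0 x0 t. \<forall>i. (\<lambda>\<tau>. dlist fs g (y + \<tau> *\<^sub>R ax i)) differentiable (at 0)) \<and>
     (\<forall>y\<in>box0 x0 t. \<bar>dlist fs g y\<bar> \<le> K * \<rho>^(length fs) * fact (length fs))" if x0: "x0 \<in> \<Omega>" for x0
  proof -
    obtain r c where r: "r > 0" and hs: "\<forall>x\<in>ball x0 r. ((\<lambda>\<alpha>. c \<alpha> * (\<Prod>i\<in>UNIV. (x$i - x0$i) ^ \<alpha> i)) has_sum g x) UNIV"
      using ra x0 unfolding real_analytic_on_def by blast
    show ?thesis by (rule analytic_local[OF r]) (use hs in auto)
  qed
  have inbox: "x0 \<in> box0 x0 t" if "t > 0" for x0 :: "real^'n" and t using that by (simp add: box0_def)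
  show "smooth_on \<Omega> g"
    unfolding smooth_on_def
  proof (intro allI conjI ballI)
    fix ds :: "'n list"
    have "isCont (dlist ds g) x0" if x0: "x0 \<in> \<Omega>" for x0
    proof -
      obtain t where t: "t > 0" and c: "continuous_on (box0 x0 t) (dlist ds g)" using loc[OF x0] by blast
      have m: "x0 \<in> box0 x0 t" using t by (simp add: box0_def)
      have o: "open (box0 x0 t)" by (rule open_box0)
      show ?thesis using c m continuous_on_eq_continuous_at[OF o] by blast
    qed
    then show "continuous_on \<Omega> (dlist ds g)" by (simp add: continuous_at_imp_continuous_on)
    fix i x assume x: "x \<in> \<Omega>"
    obtain t where t: "t > 0" and d: "\<forall>y\<in>box0 x t. \<forall>i. (\<lambda>\<tau>. dlist ds g (y + \<tau> *\<^sub>R ax i)) differentiable (at 0)"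
      using loc[OF x] by blast
    show "(\<lambda>\<tau>. dlist ds g (x + \<tau> *\<^sub>R ax i)) differentiable (at 0)" using d inbox[OF t] by blast
  qed
  fix K assume K: "compact K" "K \<subseteq> \<Omega>"
  show "\<exists>C R. C \<ge> 0 \<and> R \<ge> 1 \<and> (\<forall>fs. \<forall>y\<in>K. \<bar>dlist fs g y\<bar> \<le> C * R^(length fs) * fact (length fs))"
  proof (rule compact_family_bound[OF K(1), where h="\<lambda>fs. dlist fs g" and len=length])
    show "\<forall>x\<in>K. \<exists>N C R. open N \<and> x \<in> N \<and> C \<ge> 0 \<and> R \<ge> 1 \<and>
       (\<forall>b. \<forall>y\<in>N. \<bar>dlist b g y\<bar> \<le> C * R^(length b) * fact (length b))"
    proof
      fix x assume "x \<in> K"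
      then have x: "x \<in> \<Omega>" using K by auto
      obtain t C \<rho> where t: "t > 0" and C: "C \<ge> 0" and \<rho>: "\<rho> > 0"
        and b: "\<forall>fs. \<forall>y\<in>box0 x t. \<bar>dlist fs g y\<bar> \<le> C * \<rho>^(length fs) * fact (length fs)"
        using loc[OF x] by blast
      have "\<bar>dlist fs g y\<bar> \<le> C * (max \<rho> 1)^(length fs) * fact (length fs)" if "y \<in> box0 x t" for fs y
      proof -
        have "\<bar>dlist fs g y\<bar> \<le> C * \<rho>^(length fs) * fact (length fs)" using b that by blast
        also have "\<dots> \<le> C * (max \<rho> 1)^(length fs) * fact (length fs)"
          using C \<rho> by (intro mult_right_mono mult_left_mono power_mono) auto
        finally show ?thesis .
      qed
      then show "\<exists>N C R. open N \<and> x \<in> N \<and> C \<ge> 0 \<and> R \<ge> 1 \<and>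
         (\<forall>b. \<forall>y\<in>N. \<bar>dlist b g y\<bar> \<le> C * R^(length b) * fact (length b))"
        using open_box0[of x t] inbox[OF t] C by (intro exI[of _ "box0 x t"] exI[of _ C] exI[of _ "max \<rho> 1"]) auto
    qed
  qed
qed

lemma exists_rco:
  fixes K :: "(real^'m::finite) set"
  assumes K: "compact K" and op: "open \<Omega>" and sub: "K \<subseteq> \<Omega>"
  shows "\<exists>W. rel_compact_open W \<Omega> \<and> K \<subseteq> W"
proof -
  obtain e where e: "e > 0" "\<And>x. x \<in> K \<Longrightarrow> \<exists>G\<in>{\<Omega>}. ball x e \<subseteq> G"
    by (rule Heine_Borel_lemma[OF K, of "{\<Omega>}"]) (use sub op in auto)
  then have eb: "\<And>x. x \<in> K \<Longrightarrow> ball x e \<subseteq> \<Omega>" by blast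
  define W where "W = (\<Union>x\<in>K. ball x (e/2))"
  have "open W" by (simp add: W_def open_UN)
  moreover have "K \<subseteq> W" using e by (force simp: W_def)
  moreover have "bounded W"
  proof -
    obtain B where B: "\<And>x. x \<in> K \<Longrightarrow> norm x \<le> B" using compact_imp_bounded[OF K] by (meson bounded_iff)
    have "W \<subseteq> cball 0 (B + e)"
    proof
      fix w assume "w \<in> W"
      then obtain x where x: "x \<in> K" "dist x w < e/2" by (auto simp: W_def)
      have "norm w \<le> norm x + dist x w" by (metis dist_norm norm_triangle_sub norm_minus_commute add.commute)
      then show "w \<in> cball 0 (B + e)" using B[OF x(1)] x(2) e by simp
    qed
    then show ?thesis using bounded_cball bounded_subset by blast
  qed
  moreover have "closure W \<subseteq> \<Omega>"
  proof
    fix y assume "y \<in> closure W"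
    then obtain w where w: "w \<in> W" "dist w y < e/2" using e closure_approachable[of y W] by (meson half_gt_zero)
    then obtain x where x: "x \<in> K" "dist x w < e/2" by (auto simp: W_def)
    have "dist x y \<le> dist x w + dist w y" by (rule dist_triangle)
    then have "dist x y < e" using w x by linarith
    then show "y \<in> \<Omega>" using eb[OF x(1)] by auto
  qed
  ultimately show ?thesis unfolding rel_compact_open_def by auto
qed

lemma analytic_map_props:
  fixes F :: "real^'n::finite \<Rightarrow> real^'m::finite"
  assumes op: "open \<Omega>" and ra: "real_analytic_map \<Omega> F"
  shows "\<And>j. smooth_on \<Omega> (\<lambda>y. F y $ j)"
    and "\<And>K. compact K \<Longrightarrow> K \<subseteq> \<Omega> \<Longrightarrow> \<exists>C R. C > 0 \<and> R > 0 \<and>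
           (\<forall>fs j. \<forall>y\<in>K. \<bar>dlist fs (\<lambda>y. F y $ j) y\<bar> \<le> bw C R (length fs))"
proof -
  have raj: "real_analytic_on \<Omega> (\<lambda>y. F y $ j)" for j using ra by (simp add: real_analytic_map_def)
  show "\<And>j. smooth_on \<Omega> (\<lambda>y. F y $ j)" by (rule analytic_global(1)[OF op raj])
  fix K assume K: "compact K" "K \<subseteq> \<Omega>"
  have "\<forall>j. \<exists>C R. C \<ge> 0 \<and> R \<ge> 1 \<and> (\<forall>fs. \<forall>y\<in>K. \<bar>dlist fs (\<lambda>y. F y $ j) y\<bar> \<le> C * R^(length fs) * fact (length fs))"
    using analytic_global(2)[OF op raj K] by blast
  then obtain CC RR where CR: "\<And>j. CC j \<ge> 0 \<and> RR j \<ge> 1 \<and>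
      (\<forall>fs. \<forall>y\<in>K. \<bar>dlist fs (\<lambda>y. F y $ j) y\<bar> \<le> CC j * RR j^(length fs) * fact (length fs))"
    by metis
  define C where "C = 1 + (\<Sum>j\<in>UNIV. CC j)"
  define R where "R = 1 + (\<Sum>j\<in>UNIV. RR j)"
  have CC: "CC j \<le> C" for j
  proof -
    have "CC j \<le> (\<Sum>j\<in>UNIV. CC j)" by (rule member_le_sum) (use CR in auto)
    then show ?thesis by (simp add: C_def)
  qed
  have RR: "RR j \<le> R" for j
  proof -
    have "RR j \<le> (\<Sum>j\<in>UNIV. RR j)" by (rule member_le_sum) (use CR in \<open>auto intro: order_trans[OF zero_le_one]\<close>)
    then show ?thesis by (simp add: R_def)
  qed
  have C0: "C > 0" unfolding C_def using CR by (smt (verit) sum_nonneg)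
  have R0: "R > 0" unfolding R_def using CR by (smt (verit) sum_nonneg)
  have "\<bar>dlist fs (\<lambda>y. F y $ j) y\<bar> \<le> bw C R (length fs)" if "y \<in> K" for fs j y
  proof -
    have "\<bar>dlist fs (\<lambda>y. F y $ j) y\<bar> \<le> CC j * RR j^(length fs) * fact (length fs)" using CR that by blast
    also have "\<dots> \<le> C * R^(length fs) * fact (length fs)"
      using CR[of j] CC[of j] RR[of j] by (intro mult_right_mono mult_mono power_mono) auto
    finally show ?thesis by (simp add: bw_def)
  qed
  then show "\<exists>C R. C > 0 \<and> R > 0 \<and> (\<forall>fs j. \<forall>y\<in>K. \<bar>dlist fs (\<lambda>y. F y $ j) y\<bar> \<le> bw C R (length fs))"
    using C0 R0 by blast
qed



lemma pullback_est:
  fixes F :: "real^'n::finite \<Rightarrow> real^'m::finite" and u :: "real^'m \<Rightarrow> real"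
  assumes op1: "open \<Omega>1" and op2: "open \<Omega>2" and FO: "F ` \<Omega>1 \<subseteq> \<Omega>2"
    and sF: "\<And>j. smooth_on \<Omega>1 (\<lambda>y. F y $ j)" and su: "smooth_on \<Omega>2 u"
    and Fbd: "\<And>K. compact K \<Longrightarrow> K \<subseteq> \<Omega>1 \<Longrightarrow> \<exists>C R. C > 0 \<and> R > 0 \<and>
           (\<forall>fs j. \<forall>y\<in>K. \<bar>dlist fs (\<lambda>y. F y $ j) y\<bar> \<le> bw C R (length fs))"
    and V: "rel_compact_open V \<Omega>1"
  shows "\<exists>W (C::real) (R::real). rel_compact_open W \<Omega>2 \<and> C > 0 \<and> R > 0 \<and>
    (\<forall>Cu \<rho> M. (\<forall>y\<in>W. \<forall>\<alpha>. \<bar>pmulti \<alpha> u y\<bar> \<le> Cu * (\<rho> ^ mlen \<alpha> * M (mlen \<alpha>))) \<longrightarrow>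
      (\<forall>x\<in>V. \<forall>ds. \<bar>dlist ds (u \<circ> F) x\<bar> \<le>
         (\<Sum>j\<le>length ds. (Cu * \<rho>^j * M j) * ((CARD('m) * C)^j * R^(length ds) * Lah (length ds) j))))"
proof -
  have K1: "compact (closure V)" "closure V \<subseteq> \<Omega>1" using V by (auto simp: rel_compact_open_def)
  have VO: "V \<subseteq> \<Omega>1" using K1 closure_subset by blast
  have cF: "continuous_on \<Omega>1 F" by (rule smooth_vec_cont[OF sF])
  have "compact (F ` closure V)"
    by (rule compact_continuous_image[OF continuous_on_subset[OF cF K1(2)] K1(1)])
  moreover have "F ` closure V \<subseteq> \<Omega>2" using FO K1 by auto
  ultimately obtain W where W: "rel_compact_open W \<Omega>2" "F ` closure V \<subseteq> W"
    using exists_rco[OF _ op2] by metis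
  obtain C R where CR: "C > 0" "R > 0"
    and Fb: "\<forall>fs j. \<forall>y\<in>closure V. \<bar>dlist fs (\<lambda>y. F y $ j) y\<bar> \<le> bw C R (length fs)"
    using Fbd[OF K1] by metis
  have main: "\<forall>x\<in>V. \<forall>ds. \<bar>dlist ds (u \<circ> F) x\<bar> \<le>
         (\<Sum>j\<le>length ds. (Cu * \<rho>^j * M j) * ((CARD('m) * C)^j * R^(length ds) * Lah (length ds) j))"
    if hyp: "\<forall>y\<in>W. \<forall>\<alpha>. \<bar>pmulti \<alpha> u y\<bar> \<le> Cu * (\<rho> ^ mlen \<alpha> * M (mlen \<alpha>))" for Cu \<rho> M
  proof (intro ballI allI)
    fix x ds assume x: "x \<in> V"
    have xc: "x \<in> closure V" using x closure_subset by blast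
    have FxW: "F x \<in> W" using W(2) xc by blast
    have Fx2: "F x \<in> \<Omega>2" using FO VO x by blast
    have hypx: "\<And>\<alpha>. \<bar>pmulti \<alpha> u (F x)\<bar> \<le> Cu * (\<rho> ^ mlen \<alpha> * M (mlen \<alpha>))"
      using hyp FxW by blast
    have Ub: "\<bar>dlist es u (F x)\<bar> \<le> Cu * \<rho>^(length es) * M (length es)" for es
      using pmulti_bound_dlist[OF su op2 Fx2, of "\<lambda>l. Cu * (\<rho>^l * M l)", OF hypx, of es]
      by (simp only: mult.assoc)
    show "\<bar>dlist ds (u \<circ> F) x\<bar> \<le>
         (\<Sum>j\<le>length ds. (Cu * \<rho>^j * M j) * ((CARD('m) * C)^j * R^(length ds) * Lah (length ds) j))"
    proof (rule comp_bound[OF _ _ _ CR])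
      show "dlist ds (u \<circ> F) x = sum_list (map (\<lambda>t. vl u F t x) (Tm ds))"
        by (rule Tm_repr[OF su op2 op1 sF FO]) (use VO x in auto)
      show "\<bar>dlist es u (F x)\<bar> \<le> Cu * \<rho>^(length es) * M (length es)" for es by (rule Ub)
      show "\<bar>dlist fs (\<lambda>y. F y $ j) x\<bar> \<le> bw C R (length fs)" if "fs \<noteq> []" for fs j
        using Fb xc by blast
    qed
  qed
  show ?thesis
    apply (rule exI[of _ W], rule exI[of _ C], rule exI[of _ R])
    apply (intro conjI W(1) CR allI impI)
    apply (rule main)
    apply assumption
    done
qed

theorem theorem2p8:
  fixes \<MM> :: "(nat \<Rightarrow> real) set"
    and F :: "real^'n::finite \<Rightarrow> real^'m::finite"
    and \<Omega>1 :: "(real^'n) set" and \<Omega>2 :: "(real^'m) set"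
  assumes "weight_matrix \<MM>"
    and "\<forall>M\<in>\<MM>. filterlim (\<lambda>k. (M k / fact k) powr (1 / real k)) at_top sequentially"
    and "open \<Omega>1" and "open \<Omega>2"
    and "F ` \<Omega>1 \<subseteq> \<Omega>2"
    and "real_analytic_map \<Omega>1 F"
  shows "(\<forall>u\<in>roumieu \<MM> \<Omega>2. u \<circ> F \<in> roumieu \<MM> \<Omega>1) \<and>
         (\<forall>u\<in>beurling \<MM> \<Omega>2. u \<circ> F \<in> beurling \<MM> \<Omega>1)"
proof -
  note wm = assms(1) and lim = assms(2) and op1 = assms(3) and op2 = assms(4)
    and FO = assms(5) and ra = assms(6)
  have ws: "\<And>M. M \<in> \<MM> \<Longrightarrow> weight_sequence M" using wm by (simp add: weight_matrix_def)
  note sF = analytic_map_props(1)[OF op1 ra]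
  have Fbd: "\<And>K. compact K \<Longrightarrow> K \<subseteq> \<Omega>1 \<Longrightarrow> \<exists>C R. C > 0 \<and> R > 0 \<and>
           (\<forall>fs j. \<forall>y\<in>K. \<bar>dlist fs (\<lambda>y. F y $ j) y\<bar> \<le> bw C R (length fs))"
    by (rule analytic_map_props(2)[OF op1 ra])
  have fin: "\<exists>C0. \<forall>x\<in>V. \<forall>\<alpha>. \<bar>pmulti \<alpha> (u \<circ> F) x\<bar> \<le> C0 * (\<rho>0 ^ mlen \<alpha> * M (mlen \<alpha>))"
    if M: "M \<in> \<MM>" and R: "R > 0" and A: "A > 0" and \<rho>: "\<rho> > 0" and \<epsilon>: "\<epsilon> > 0"
      and lam: "\<rho> * A \<le> lam" "\<epsilon> \<le> lam" and r0: "\<rho>0 = 12 * R * lam"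
      and est: "\<forall>x\<in>V. \<forall>ds. \<bar>dlist ds (u \<circ> F) x\<bar> \<le>
         (\<Sum>j\<le>length ds. (Cu * \<rho>^j * M j) * (A^j * R^(length ds) * Lah (length ds) j))"
    for M and R A \<rho> \<epsilon> lam \<rho>0 Cu :: real and V u
  proof -
    have wsM: "weight_sequence M" by (rule ws[OF M])
    obtain D where D: "D \<ge> 0" "\<And>l. fact l / M l \<le> D * \<epsilon>^l"
      using m_lower[OF wsM _ \<epsilon>] lim M by blast
    define Cu' where "Cu' = max Cu 0"
    have Cu': "Cu' \<ge> 0" by (simp add: Cu'_def)
    have dl: "\<bar>dlist ds (u \<circ> F) x\<bar> \<le> (Cu' * D) * (\<rho>0^(length ds) * M (length ds))" if x: "x \<in> V" for x ds
    proof -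
      have "\<bar>dlist ds (u \<circ> F) x\<bar> \<le>
         (\<Sum>j\<le>length ds. (Cu * \<rho>^j * M j) * (A^j * R^(length ds) * Lah (length ds) j))"
        using est x by blast
      also have "\<dots> \<le> (\<Sum>j\<le>length ds. (Cu' * \<rho>^j * M j) * (A^j * R^(length ds) * Lah (length ds) j))"
      proof (rule sum_mono)
        fix j
        have "0 \<le> \<rho>^j * M j * (A^j * R^(length ds) * Lah (length ds) j)"
          using \<rho> A R ws_pos[OF wsM, of j] Lah_nonneg by simp
        then show "(Cu * \<rho>^j * M j) * (A^j * R^(length ds) * Lah (length ds) j)
            \<le> (Cu' * \<rho>^j * M j) * (A^j * R^(length ds) * Lah (length ds) j)"
          unfolding Cu'_def using mult_right_mono[of Cu "max Cu 0"] by (simp add: mult.assoc)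
      qed
      also have "\<dots> \<le> Cu' * D * (12 * R * lam)^(length ds) * M (length ds)"
        by (rule final_arith[OF wsM Cu' D(1) \<rho> A R \<epsilon> lam D(2)])
      finally show ?thesis using r0 by (simp add: mult.assoc)
    qed
    show ?thesis
      by (intro exI[of _ "Cu' * D"] ballI allI dlist_bound_pmulti) (use dl in \<open>auto simp: o_def\<close>)
  qed
  show ?thesis
  proof (intro conjI ballI)
    fix u assume u: "u \<in> roumieu \<MM> \<Omega>2"
    then have su: "smooth_on \<Omega>2 u" by (simp add: roumieu_def)
    have hyp: "\<And>W. rel_compact_open W \<Omega>2 \<Longrightarrow> \<exists>M\<in>\<MM>. \<exists>\<rho>>0. \<exists>C. \<forall>x\<in>W. \<forall>\<alpha>.
            \<bar>pmulti \<alpha> u x\<bar> \<le> C * (\<rho> ^ mlen \<alpha> * M (mlen \<alpha>))"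
      using u by (simp add: roumieu_def)
    show "u \<circ> F \<in> roumieu \<MM> \<Omega>1"
      unfolding roumieu_def
    proof (intro CollectI conjI allI impI)
      show "smooth_on \<Omega>1 (u \<circ> F)" by (rule comp_smooth[OF su op2 op1 sF FO])
      fix V assume V: "rel_compact_open V \<Omega>1"
      obtain W and C R :: real where W: "rel_compact_open W \<Omega>2" and CR: "C > 0" "R > 0"
        and est: "\<And>Cu \<rho> M. (\<forall>y\<in>W. \<forall>\<alpha>. \<bar>pmulti \<alpha> u y\<bar> \<le> Cu * (\<rho> ^ mlen \<alpha> * M (mlen \<alpha>))) \<Longrightarrow>
      (\<forall>x\<in>V. \<forall>ds. \<bar>dlist ds (u \<circ> F) x\<bar> \<le>
         (\<Sum>j\<le>length ds. (Cu * \<rho>^j * M j) * ((CARD('m) * C)^j * R^(length ds) * Lah (length ds) j)))"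
        using pullback_est[OF op1 op2 FO sF su Fbd V] by blast
      obtain M \<rho> Cu where M: "M \<in> \<MM>" and \<rho>: "\<rho> > 0"
        and b: "\<forall>x\<in>W. \<forall>\<alpha>. \<bar>pmulti \<alpha> u x\<bar> \<le> Cu * (\<rho> ^ mlen \<alpha> * M (mlen \<alpha>))"
        using hyp[OF W] by blast
      have A: "real CARD('m) * C > 0" using CR by simp
      define lam where "lam = max (\<rho> * (real CARD('m) * C)) 1"
      have lam: "\<rho> * (real CARD('m) * C) \<le> lam" "1 \<le> lam" by (auto simp: lam_def)
      obtain C0 where C0: "\<forall>x\<in>V. \<forall>\<alpha>. \<bar>pmulti \<alpha> (u \<circ> F) x\<bar> \<le> C0 * ((12 * R * lam) ^ mlen \<alpha> * M (mlen \<alpha>))"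
        using fin[OF M CR(2) A \<rho> zero_less_one lam refl est[OF b]] by blast
      have "12 * R * lam > 0" using CR lam by simp
      then show "\<exists>M\<in>\<MM>. \<exists>\<rho>>0. \<exists>C. \<forall>x\<in>V. \<forall>\<alpha>. \<bar>pmulti \<alpha> (u \<circ> F) x\<bar> \<le> C * (\<rho> ^ mlen \<alpha> * M (mlen \<alpha>))"
        using M C0 by blast
    qed
  next
    fix u assume u: "u \<in> beurling \<MM> \<Omega>2"
    then have su: "smooth_on \<Omega>2 u" by (simp add: beurling_def)
    have hyp: "\<And>W. rel_compact_open W \<Omega>2 \<Longrightarrow> \<forall>M\<in>\<MM>. \<forall>\<rho>>0. \<exists>C. \<forall>x\<in>W. \<forall>\<alpha>.
            \<bar>pmulti \<alpha> u x\<bar> \<le> C * (\<rho> ^ mlen \<alpha> * M (mlen \<alpha>))"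
      using u by (simp add: beurling_def)
    show "u \<circ> F \<in> beurling \<MM> \<Omega>1"
      unfolding beurling_def
    proof (intro CollectI conjI allI impI ballI)
      show "smooth_on \<Omega>1 (u \<circ> F)" by (rule comp_smooth[OF su op2 op1 sF FO])
      fix V M \<rho>0 assume V: "rel_compact_open V \<Omega>1" and M: "M \<in> \<MM>" and r0: "(\<rho>0::real) > 0"
      obtain W and C R :: real where W: "rel_compact_open W \<Omega>2" and CR: "C > 0" "R > 0"
        and est: "\<And>Cu \<rho> M. (\<forall>y\<in>W. \<forall>\<alpha>. \<bar>pmulti \<alpha> u y\<bar> \<le> Cu * (\<rho> ^ mlen \<alpha> * M (mlen \<alpha>))) \<Longrightarrow>
      (\<forall>x\<in>V. \<forall>ds. \<bar>dlist ds (u \<circ> F) x\<bar> \<le>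
         (\<Sum>j\<le>length ds. (Cu * \<rho>^j * M j) * ((CARD('m) * C)^j * R^(length ds) * Lah (length ds) j)))"
        using pullback_est[OF op1 op2 FO sF su Fbd V] by blast
      define A where "A = real CARD('m) * C"
      have A: "A > 0" using CR by (simp add: A_def)
      define lam where "lam = \<rho>0 / (12 * R)"
      have lam0: "lam > 0" using r0 CR by (simp add: lam_def)
      define \<rho> where "\<rho> = lam / A"
      have \<rho>: "\<rho> > 0" using lam0 A by (simp add: \<rho>_def)
      have \<rho>A: "\<rho> * A \<le> lam" using A by (simp add: \<rho>_def)
      obtain Cu where b: "\<forall>x\<in>W. \<forall>\<alpha>. \<bar>pmulti \<alpha> u x\<bar> \<le> Cu * (\<rho> ^ mlen \<alpha> * M (mlen \<alpha>))"
        using hyp[OF W] M \<rho> by blast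
      have r0e: "\<rho>0 = 12 * R * lam" using CR by (simp add: lam_def)
      show "\<exists>C. \<forall>x\<in>V. \<forall>\<alpha>. \<bar>pmulti \<alpha> (u \<circ> F) x\<bar> \<le> C * (\<rho>0 ^ mlen \<alpha> * M (mlen \<alpha>))"
        using fin[OF M CR(2) A \<rho> lam0 \<rho>A order_refl r0e est[OF b, folded A_def]] by blast
    qed
  qed
qed


end
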